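(* Let $G$ be a unicyclic graph on $n$ vertices (a connected graph containing exactly one cycle). (i) If the cycle of $G$ has $2k+1$ vertices, then $P_{DP}(G,m)=P(G,m)$ for every $m\in\mathbb{N}$. (ii) If the cycle of $G$ has $2k+2$ vertices, then for every integer $m\geq 2$, $$P_{DP}(G,m)=(m-1)^n-(m-1)^{n-2k-2}.$$
   Context: All graphs are finite and simple. $P(G,m)$ denotes the chromatic polynomial of $G$. A cover of a graph $G$ is a pair $\mathcal{H}=(L,H)$ where $H$ is a graph and $L:V(G)\to\mathcal{P}(V(H))$ satisfies: (1) the sets $L(u)$, $u\in V(G)$, partition $V(H)$; (2) for every $u$, $H[L(u)]$ is complete; (3) if $E_H(L(u),L(v))\neq\emptyset$ then $u=v$ or $uv\in E(G)$; (4) if $uv\in E(G)$ then $E_H(L(u),L(v))$ is a matching (possibly empty). Here $E_H(S,U)$ is the set of edges of $H$ between $S$ and $U$. The cover is $m$-fold if $|L(u)|=m$ for all $u$. An $\mathcal{H}$-coloring is an independent set of $H$ of size $|V(G)|$. $P_{DP}(G,\mathcal{H})$ is the number of $\mathcal{H}$-colorings, and $P_{DP}(G,m)$ is the minimum of $P_{DP}(G,\mathcal{H})$ over all $m$-fold covers $\mathcal{H}$ of $G$. *)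

theory Defs
  imports Main "HOL-Library.FuncSet"
begin

definition simple_graph :: "'v set \<Rightarrow> 'v set set \<Rightarrow> bool" where
  "simple_graph V E \<longleftrightarrow> finite V \<and>
     (\<forall>e\<in>E. \<exists>u v. u \<noteq> v \<and> u \<in> V \<and> v \<in> V \<and> e = {u, v})"

definition connected_graph :: "'v set \<Rightarrow> 'v set set \<Rightarrow> bool" where
  "connected_graph V E \<longleftrightarrow> V \<noteq> {} \<and>
     (\<forall>u\<in>V. \<forall>v\<in>V. (u, v) \<in> {(x, y). {x, y} \<in> E}\<^sup>*)"

definition is_cycle :: "'v set \<Rightarrow> 'v set set \<Rightarrow> 'v list \<Rightarrow> bool" where
  "is_cycle V E xs \<longleftrightarrow> length xs \<ge> 3 \<and> distinct xs \<and> set xs \<subseteq> V \<and>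
     (\<forall>i < length xs. {xs ! i, xs ! ((i + 1) mod length xs)} \<in> E)"

definition cycle_edges :: "'v list \<Rightarrow> 'v set set" where
  "cycle_edges xs = {{xs ! i, xs ! ((i + 1) mod length xs)} | i. i < length xs}"

definition unicyclic :: "'v set \<Rightarrow> 'v set set \<Rightarrow> bool" where
  "unicyclic V E \<longleftrightarrow> simple_graph V E \<and> connected_graph V E \<and>
     card {cycle_edges xs | xs. is_cycle V E xs} = 1"

definition chrom_poly :: "'v set \<Rightarrow> 'v set set \<Rightarrow> nat \<Rightarrow> nat" where
  "chrom_poly V E m = card {f \<in> V \<rightarrow>\<^sub>E {..<m}. \<forall>u v. {u, v} \<in> E \<longrightarrow> f u \<noteq> f v}"

definition edges_between :: "'w set set \<Rightarrow> 'w set \<Rightarrow> 'w set \<Rightarrow> 'w set set" where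
  "edges_between EH S U = {e \<in> EH. \<exists>x\<in>S. \<exists>y\<in>U. e = {x, y}}"

definition is_matching :: "'w set set \<Rightarrow> bool" where
  "is_matching M \<longleftrightarrow> (\<forall>e\<in>M. \<forall>e'\<in>M. e \<noteq> e' \<longrightarrow> e \<inter> e' = {})"

definition is_cover :: "'v set \<Rightarrow> 'v set set \<Rightarrow> ('v \<Rightarrow> 'w set) \<Rightarrow> 'w set \<Rightarrow> 'w set set \<Rightarrow> bool" where
  "is_cover V E L VH EH \<longleftrightarrow> simple_graph VH EH \<and>
     VH = (\<Union>u\<in>V. L u) \<and>
     (\<forall>u\<in>V. \<forall>v\<in>V. u \<noteq> v \<longrightarrow> L u \<inter> L v = {}) \<and>
     (\<forall>u\<in>V. \<forall>x\<in>L u. \<forall>y\<in>L u. x \<noteq> y \<longrightarrow> {x, y} \<in> EH) \<and>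
     (\<forall>u\<in>V. \<forall>v\<in>V. edges_between EH (L u) (L v) \<noteq> {} \<longrightarrow> u = v \<or> {u, v} \<in> E) \<and>
     (\<forall>u\<in>V. \<forall>v\<in>V. {u, v} \<in> E \<longrightarrow> is_matching (edges_between EH (L u) (L v)))"

definition is_m_fold_cover :: "'v set \<Rightarrow> 'v set set \<Rightarrow> nat \<Rightarrow> ('v \<Rightarrow> 'w set) \<Rightarrow> 'w set \<Rightarrow> 'w set set \<Rightarrow> bool" where
  "is_m_fold_cover V E m L VH EH \<longleftrightarrow> is_cover V E L VH EH \<and> (\<forall>u\<in>V. card (L u) = m)"

definition independent_set :: "'w set \<Rightarrow> 'w set set \<Rightarrow> 'w set \<Rightarrow> bool" where
  "independent_set VH EH I \<longleftrightarrow> I \<subseteq> VH \<and> (\<forall>x\<in>I. \<forall>y\<in>I. {x, y} \<notin> EH)"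

text \<open>Number of H-colourings: independent sets of H of size |V(G)|.\<close>
definition P_DP_cover :: "'v set \<Rightarrow> ('w set \<times> 'w set set) \<Rightarrow> nat" where
  "P_DP_cover V H = card {I. independent_set (fst H) (snd H) I \<and> card I = card V}"

text \<open>Cover vertices are taken from
  the type 'v \<times> nat, which is big enough to contain an isomorphic copy of every
  m-fold cover of a finite graph.\<close>
definition P_DP :: "'v set \<Rightarrow> 'v set set \<Rightarrow> nat \<Rightarrow> nat" where
  "P_DP V E m = Inf {P_DP_cover V (VH, EH) | (L :: 'v \<Rightarrow> ('v \<times> nat) set) VH EH.
                       is_m_fold_cover V E m L VH EH}"

end

theory Submission
  imports Defs "HOL-Library.Transitive_Closure_Table"
begin
lemma simple_graph_edge:
  assumes "simple_graph V E" "{u,v} \<in> E"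
  shows "u \<noteq> v" "u \<in> V" "v \<in> V"
  using assms unfolding simple_graph_def by (auto simp: doubleton_eq_iff)

lemma simple_graph_edge_ex:
  assumes "simple_graph V E" "e \<in> E"
  obtains u v where "u \<noteq> v" "u \<in> V" "v \<in> V" "e = {u,v}"
  using assms unfolding simple_graph_def by blast

lemma rtrancl_path_idx:
  assumes "rtrancl_path r x ps y"
  shows "(\<forall>i<length ps. r ((x#ps)!i) (ps!i)) \<and> last (x#ps) = y"
  using assms
proof (induction)
  case (base x)
  then show ?case by simp
next
  case (step x y ys z)
  show ?case
  proof (intro conjI allI impI)
    fix i assume "i < length (y#ys)"
    then show "r ((x # y # ys) ! i) ((y # ys) ! i)"
      using step by (cases i) auto
  next
    show "last (x # y # ys) = z" using step by simp
  qed
qed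

lemma rtrancl_path_set:
  assumes "rtrancl_path r x ps y" "\<And>a b. r a b \<Longrightarrow> b \<in> W"
  shows "set ps \<subseteq> W"
  using assms by (induction) auto

lemma sym_rtranclp:
  assumes "\<And>a b. r a b \<Longrightarrow> r b a" "r\<^sup>*\<^sup>* x y"
  shows "r\<^sup>*\<^sup>* y x"
  using assms(2)
proof (induction rule: rtranclp_induct)
  case base then show ?case by simp
next
  case (step y z)
  then show ?case using assms(1) by (meson converse_rtranclp_into_rtranclp)
qed

lemma rtrancl_cross:
  assumes "(u,v) \<in> {(x,y). {x,y} \<in> E}\<^sup>*" "u \<in> W" "v \<notin> W"
  shows "\<exists>a b. a \<in> W \<and> b \<notin> W \<and> {a,b} \<in> E"
  using assms
proof (induction rule: rtrancl_induct)
  case base then show ?case by simp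
next
  case (step y z)
  then show ?case by (cases "y \<in> W") auto
qed

locale ucg =
  fixes V :: "'v set" and E :: "'v set set" and xs :: "'v list"
  assumes uni: "unicyclic V E" and cyc: "is_cycle V E xs"
begin

abbreviation "l \<equiv> length xs"
abbreviation "S \<equiv> set xs"

lemma sg: "simple_graph V E" using uni unfolding unicyclic_def by simp
lemma finV: "finite V" using sg unfolding simple_graph_def by simp
lemma conn: "connected_graph V E" using uni unfolding unicyclic_def by simp
lemma l3: "l \<ge> 3" and dist: "distinct xs" and SV: "S \<subseteq> V"
  and cyc_edge: "\<And>i. i < l \<Longrightarrow> {xs ! i, xs ! ((i + 1) mod l)} \<in> E"
  using cyc unfolding is_cycle_def by auto

lemma edge_irrefl: "{u,u} \<notin> E"
  using simple_graph_edge(1)[OF sg] by blast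

lemma cycle_unique:
  assumes "is_cycle V E ys"
  shows "cycle_edges ys = cycle_edges xs"
proof -
  have "card {cycle_edges xs | xs. is_cycle V E xs} = 1"
    using uni unfolding unicyclic_def by simp
  then obtain e where e: "{cycle_edges xs | xs. is_cycle V E xs} = {e}"
    by (rule card_1_singletonE)
  have "cycle_edges ys \<in> {e}" using assms e by blast
  moreover have "cycle_edges xs \<in> {e}" using cyc e by blast
  ultimately show ?thesis by simp
qed

lemma cycle_edges_mem: "{ys ! i, ys ! ((i + 1) mod length ys)} \<in> cycle_edges ys"
  if "i < length ys" for ys :: "'v list" and i
  using that unfolding cycle_edges_def by blast

lemma mem_cycle_edges_xs:
  assumes "e \<in> cycle_edges xs"
  shows "\<exists>i<l. e = {xs ! i, xs ! ((i + 1) mod l)}"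
  using assms unfolding cycle_edges_def by blast

lemma chord:
  assumes ij: "i < j" "j < l" and e: "{xs ! i, xs ! j} \<in> E"
  shows "\<exists>t<l. {xs ! i, xs ! j} = {xs ! t, xs ! ((t + 1) mod l)}"
proof (cases "j = i + 1")
  case True
  then show ?thesis using ij by (intro exI[of _ i]) auto
next
  case F1: False
  show ?thesis
  proof (cases "i = 0 \<and> j = l - 1")
    case True
    then have "Suc (l - Suc 0) = l" using l3 by simp
    then show ?thesis using True l3 by (intro exI[of _ "l - 1"]) (auto simp: insert_commute)
  next
    case False
    define ys where "ys = take (j - i + 1) (drop i xs)"
    have len: "length ys = j - i + 1" using ij unfolding ys_def by simp
    have nth: "ys ! t = xs ! (i + t)" if "t \<le> j - i" for t
      using that ij unfolding ys_def by simp
    have cy: "is_cycle V E ys"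
      unfolding is_cycle_def
    proof (intro conjI allI impI)
      show "3 \<le> length ys" using len F1 ij by simp
      show "distinct ys" unfolding ys_def using dist by simp
      show "set ys \<subseteq> V" unfolding ys_def using SV by (meson set_drop_subset set_take_subset subset_trans)
      fix t assume t: "t < length ys"
      show "{ys ! t, ys ! ((t + 1) mod length ys)} \<in> E"
      proof (cases "t < j - i")
        case True
        then have "(t + 1) mod length ys = t + 1" using len by simp
        moreover have "{xs ! (i + t), xs ! ((i + t + 1) mod l)} \<in> E"
          using cyc_edge[of "i + t"] True ij by simp
        moreover have "(i + t + 1) mod l = i + t + 1" using True ij by simp
        ultimately show ?thesis using nth[of t] nth[of "t+1"] True by simp
      next
        case False
        then have "t = j - i" using t len by simp
        moreover then have "(t + 1) mod length ys = 0" using len by simp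
        ultimately show ?thesis using nth[of t] nth[of 0] e ij by (simp add: insert_commute)
      qed
    qed
    have "{ys ! (j - i), ys ! ((j - i + 1) mod length ys)} \<in> cycle_edges ys"
      using len by (intro cycle_edges_mem) simp
    moreover have "(j - i + 1) mod length ys = 0" using len by simp
    ultimately have "{xs ! j, xs ! i} \<in> cycle_edges xs"
      using nth[of "j - i"] nth[of 0] ij cycle_unique[OF cy] by simp
    then show ?thesis using mem_cycle_edges_xs by (simp add: insert_commute)
  qed
qed

lemma S_edge:
  assumes "u \<in> S" "w \<in> S" "{u,w} \<in> E"
  shows "\<exists>t<l. {u,w} = {xs ! t, xs ! ((t + 1) mod l)}"
proof -
  obtain i j where i: "i < l" "u = xs ! i" and j: "j < l" "w = xs ! j"
    using assms by (auto simp: in_set_conv_nth)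
  have "i \<noteq> j" using assms(3) i j edge_irrefl by auto
  then show ?thesis
  proof (cases "i < j")
    case True then show ?thesis using chord[of i j] assms i j by auto
  next
    case False
    then have "j < i" using \<open>i \<noteq> j\<close> by simp
    then show ?thesis using chord[of j i] assms i j by (auto simp: insert_commute)
  qed
qed

definition R :: "'v set \<Rightarrow> 'v \<Rightarrow> 'v \<Rightarrow> bool" where
  "R W x y \<longleftrightarrow> {x,y} \<in> E \<and> x \<in> W \<and> y \<in> W"

definition inv :: "'v set \<Rightarrow> bool" where
  "inv W \<longleftrightarrow> S \<subseteq> W \<and> W \<subseteq> V \<and> (\<forall>w\<in>W. (R W)\<^sup>*\<^sup>* (xs ! 0) w)"

lemma inv_S: "inv S"
proof -
  have "(R S)\<^sup>*\<^sup>* (xs ! 0) (xs ! i)" if "i < l" for i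
    using that
  proof (induction i)
    case 0 then show ?case by simp
  next
    case (Suc i)
    have "R S (xs ! i) (xs ! Suc i)"
      using cyc_edge[of i] Suc.prems unfolding R_def by simp
    then show ?case using Suc by (meson Suc_lessD rtranclp.rtrancl_into_rtrancl)
  qed
  then show ?thesis unfolding inv_def using SV by (auto simp: in_set_conv_nth)
qed

lemma inv_insert:
  assumes "inv W" "v \<in> V" "p \<in> W" "{v,p} \<in> E"
  shows "inv (insert v W)"
proof -
  have mono: "(R W)\<^sup>*\<^sup>* a b \<Longrightarrow> (R (insert v W))\<^sup>*\<^sup>* a b" for a b
    by (rule rtranclp_mono[THEN predicate2D, rotated]) (auto simp: R_def)
  have "R (insert v W) p v" using assms unfolding R_def by (simp add: insert_commute)
  moreover have "(R (insert v W))\<^sup>*\<^sup>* (xs ! 0) p" using assms mono unfolding inv_def by blast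
  ultimately have "(R (insert v W))\<^sup>*\<^sup>* (xs ! 0) v" by (meson rtranclp.rtrancl_into_rtrancl)
  then show ?thesis using assms mono unfolding inv_def by auto
qed

lemma edge_out:
  assumes "inv W" "W \<noteq> V"
  shows "\<exists>v p. v \<in> V - W \<and> p \<in> W \<and> {v,p} \<in> E"
proof -
  obtain v where v: "v \<in> V" "v \<notin> W" using assms unfolding inv_def by blast
  have "0 < l" using l3 by linarith
  then have xS: "xs ! 0 \<in> S" by (rule nth_mem)
  have x0: "xs ! 0 \<in> W" "xs ! 0 \<in> V" using assms(1) xS SV unfolding inv_def by blast+
  have "(xs ! 0, v) \<in> {(x,y). {x,y} \<in> E}\<^sup>*" using conn v(1) x0(2) unfolding connected_graph_def by blast
  then obtain a b where ab: "a \<in> W" "b \<notin> W" "{a,b} \<in> E" using rtrancl_cross[OF _ x0(1) v(2)] by blast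
  then have "b \<in> V" "{b,a} \<in> E" using simple_graph_edge[OF sg, of a b] by (auto simp: insert_commute)
  then show ?thesis using ab by blast
qed

lemma unique_nbr:
  assumes inv: "inv W" and v: "v \<in> V" "v \<notin> W" and a: "a \<in> W" "{v,a} \<in> E"
    and b: "b \<in> W" "{v,b} \<in> E"
  shows "a = b"
proof (rule ccontr)
  assume ab: "a \<noteq> b"
  have symR: "R W x y \<Longrightarrow> R W y x" for x y unfolding R_def by (auto simp: insert_commute)
  have "(R W)\<^sup>*\<^sup>* (xs ! 0) a" "(R W)\<^sup>*\<^sup>* (xs ! 0) b" using inv a b unfolding inv_def by auto
  then have "(R W)\<^sup>*\<^sup>* a b" using sym_rtranclp[of "R W", OF symR] by (meson rtranclp_trans)
  then obtain ps0 where "rtrancl_path (R W) a ps0 b" by (auto simp: rtranclp_eq_rtrancl_path)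
  then obtain ps where ps: "rtrancl_path (R W) a ps b" and dps: "distinct (a # ps)"
    by (rule rtrancl_path_distinct)
  have psW: "set ps \<subseteq> W" using rtrancl_path_set[OF ps] unfolding R_def by blast
  have idx: "\<forall>i<length ps. R W ((a#ps)!i) (ps!i)" and lst: "last (a#ps) = b"
    using rtrancl_path_idx[OF ps] by auto
  have psne: "ps \<noteq> []" using lst ab by auto
  define cl where "cl = v # a # ps"
  have lencl: "length cl = length ps + 2" unfolding cl_def by simp
  have cy: "is_cycle V E cl"
    unfolding is_cycle_def
  proof (intro conjI allI impI)
    show "3 \<le> length cl" using psne lencl by (cases ps) auto
    show "distinct cl" unfolding cl_def using dps psW a v by auto
    show "set cl \<subseteq> V" unfolding cl_def using psW a v inv unfolding inv_def by auto
    fix i assume i: "i < length cl"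
    show "{cl ! i, cl ! ((i + 1) mod length cl)} \<in> E"
    proof -
      consider "i = 0" | "0 < i \<and> i < length ps + 1" | "i = length ps + 1" using i lencl by linarith
      then show ?thesis
      proof cases
        case 1 then show ?thesis using a lencl unfolding cl_def by simp
      next
        case 2
        then obtain i' where i': "i = Suc i'" "i' < length ps" by (cases i) auto
        have "(i + 1) mod length cl = i + 1" using 2 lencl by simp
        moreover have "R W ((a#ps)!i') (ps!i')" using idx i' by simp
        ultimately show ?thesis using i' unfolding cl_def R_def by simp
      next
        case 3
        then have "(i + 1) mod length cl = 0" using lencl by simp
        moreover have "cl ! i = b" using 3 lst psne unfolding cl_def by (simp add: last_conv_nth)
        ultimately show ?thesis using b unfolding cl_def by (simp add: insert_commute)
      qed
    qed
  qed
  have "{cl ! 0, cl ! ((0 + 1) mod length cl)} \<in> cycle_edges cl"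
    using lencl by (intro cycle_edges_mem) simp
  then have "{v, a} \<in> cycle_edges xs" using cycle_unique[OF cy] lencl unfolding cl_def by simp
  then obtain t where "t < l" "{v,a} = {xs ! t, xs ! ((t + 1) mod l)}" using mem_cycle_edges_xs by blast
  then have "v \<in> S" using l3 by (auto simp: doubleton_eq_iff intro!: nth_mem mod_less_divisor)
  then show False using v inv unfolding inv_def by blast
qed

end

locale cov = ucg V E xs for V :: "'v set" and E xs +
  fixes m :: nat and L :: "'v \<Rightarrow> 'w set" and VH :: "'w set" and EH :: "'w set set"
  assumes cover: "is_m_fold_cover V E m L VH EH"
begin

lemma H: "simple_graph VH EH \<and>
     VH = (\<Union>u\<in>V. L u) \<and>
     (\<forall>u\<in>V. \<forall>v\<in>V. u \<noteq> v \<longrightarrow> L u \<inter> L v = {}) \<and>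
     (\<forall>u\<in>V. \<forall>x\<in>L u. \<forall>y\<in>L u. x \<noteq> y \<longrightarrow> {x, y} \<in> EH) \<and>
     (\<forall>u\<in>V. \<forall>v\<in>V. edges_between EH (L u) (L v) \<noteq> {} \<longrightarrow> u = v \<or> {u, v} \<in> E) \<and>
     (\<forall>u\<in>V. \<forall>v\<in>V. {u, v} \<in> E \<longrightarrow> is_matching (edges_between EH (L u) (L v))) \<and> (\<forall>u\<in>V. card (L u) = m)"
  using cover unfolding is_m_fold_cover_def is_cover_def by (rule conjE) auto


lemma sgH: "simple_graph VH EH" using H by blast
lemma VHdef: "VH = (\<Union>u\<in>V. L u)" using H by blast
lemma disj: "\<And>u v. u \<in> V \<Longrightarrow> v \<in> V \<Longrightarrow> u \<noteq> v \<Longrightarrow> L u \<inter> L v = {}"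
  using H by blast
lemma clique: "\<And>u x y. u \<in> V \<Longrightarrow> x \<in> L u \<Longrightarrow> y \<in> L u \<Longrightarrow> x \<noteq> y \<Longrightarrow> {x,y} \<in> EH"
  using H by blast
lemma c3: "\<And>u v. u \<in> V \<Longrightarrow> v \<in> V \<Longrightarrow> edges_between EH (L u) (L v) \<noteq> {} \<Longrightarrow> u = v \<or> {u,v} \<in> E"
  using H by blast
lemma c4: "\<And>u v. u \<in> V \<Longrightarrow> v \<in> V \<Longrightarrow> {u,v} \<in> E \<Longrightarrow> is_matching (edges_between EH (L u) (L v))"
  using H by blast
lemma cardL: "\<And>u. u \<in> V \<Longrightarrow> card (L u) = m" using H by blast

lemma finVH: "finite VH" using sgH unfolding simple_graph_def by simp
lemma LVH: "u \<in> V \<Longrightarrow> L u \<subseteq> VH" using VHdef by blast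
lemma finL: "u \<in> V \<Longrightarrow> finite (L u)" using LVH finVH finite_subset by blast

lemma EH_irr: "{x,x} \<notin> EH"
proof
  assume "{x,x} \<in> EH"
  then obtain a b where "a \<noteq> b" "{x,x} = {a,b}" using simple_graph_edge_ex[OF sgH] by metis
  then show False by (auto simp: doubleton_eq_iff)
qed

lemma nb_between:
  assumes "u \<in> V" "w \<in> V" "u \<noteq> w" "x \<in> L u" "y \<in> L w" "{x,y} \<in> EH"
  shows "{u,w} \<in> E"
proof -
  have "{x,y} \<in> edges_between EH (L u) (L w)" using assms unfolding edges_between_def by blast
  then show ?thesis using c3[OF assms(1,2)] assms(3) by blast
qed

lemma nb_unique:
  assumes "u \<in> V" "w \<in> V" "{u,w} \<in> E" "y \<in> L w" "x1 \<in> L u" "x2 \<in> L u"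
    "{x1,y} \<in> EH" "{x2,y} \<in> EH"
  shows "x1 = x2"
proof (rule ccontr)
  assume ne: "x1 \<noteq> x2"
  have uw: "u \<noteq> w" using assms(3) edge_irrefl by metis
  have dj: "L u \<inter> L w = {}" using disj[OF assms(1,2) uw] .
  have "x1 \<noteq> y" using dj assms(4,5) by auto
  have e1: "{x1,y} \<in> edges_between EH (L u) (L w)" using assms(4,5,7) unfolding edges_between_def by blast
  have e2: "{x2,y} \<in> edges_between EH (L u) (L w)" using assms(4,6,8) unfolding edges_between_def by blast
  have neq: "{x1,y} \<noteq> {x2,y}"
  proof
    assume "{x1,y} = {x2,y}"
    then have "x1 \<in> {x2,y}" by blast
    then show False using ne \<open>x1 \<noteq> y\<close> by blast
  qed
  have "is_matching (edges_between EH (L u) (L w))" using c4[OF assms(1,2,3)] .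
  then have M: "\<forall>e\<in>edges_between EH (L u) (L w). \<forall>e'\<in>edges_between EH (L u) (L w). e \<noteq> e' \<longrightarrow> e \<inter> e' = {}"
    unfolding is_matching_def .
  have "{x1,y} \<inter> {x2,y} = {}" using bspec[OF bspec[OF M e1] e2] neq by blast
  then show False by blast
qed

definition col :: "'v set \<Rightarrow> ('v \<Rightarrow> 'w) set" where
  "col W = {c. (\<forall>u\<in>W. c u \<in> L u) \<and> (\<forall>u. u \<notin> W \<longrightarrow> c u = undefined) \<and>
              (\<forall>u\<in>W. \<forall>w\<in>W. {u,w} \<in> E \<longrightarrow> {c u, c w} \<notin> EH)}"

lemma fin_col: "W \<subseteq> V \<Longrightarrow> finite (col W)"
proof -
  assume W: "W \<subseteq> V"
  then have fW: "finite W" using finV finite_subset by blast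
  have "col W \<subseteq> PiE W L" unfolding col_def PiE_def Pi_def extensional_def by blast
  moreover have "finite (PiE W L)" using fW W finL by (intro finite_PiE) auto
  ultimately show ?thesis using finite_subset by blast
qed

lemma P_DP_cover_col: "P_DP_cover V (VH, EH) = card (col V)"
proof -
  define Is where "Is = {I. independent_set VH EH I \<and> card I = card V}"
  have inj: "inj_on (\<lambda>c. c ` V) (col V)"
  proof (rule inj_onI)
    fix c c' assume c: "c \<in> col V" and c': "c' \<in> col V" and eq: "c ` V = c' ` V"
    show "c = c'"
    proof
      fix u show "c u = c' u"
      proof (cases "u \<in> V")
        case False then show ?thesis using c c' unfolding col_def by auto
      next
        case True
        then have "c u \<in> c' ` V" using eq by blast
        then obtain w where w: "w \<in> V" "c u = c' w" by blast
        have cu: "c u \<in> L u" "c' w \<in> L w" using c c' True w unfolding col_def by auto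
        have "u = w"
        proof (rule ccontr)
          assume "u \<noteq> w"
          then have "L u \<inter> L w = {}" using disj True w(1) by blast
          then show False using cu w(2) by auto
        qed
        then show ?thesis using w by simp
      qed
    qed
  qed
  have img: "(\<lambda>c. c ` V) ` col V = Is"
  proof
    show "(\<lambda>c. c ` V) ` col V \<subseteq> Is"
    proof
      fix I assume "I \<in> (\<lambda>c. c ` V) ` col V"
      then obtain c where c: "c \<in> col V" "I = c ` V" by blast
      have cL: "\<And>u. u \<in> V \<Longrightarrow> c u \<in> L u" using c unfolding col_def by auto
      have "I \<subseteq> VH" using c cL LVH by blast
      moreover have "{x,y} \<notin> EH" if "x \<in> I" "y \<in> I" for x y
      proof
        assume xy: "{x,y} \<in> EH"
        have "x \<in> c ` V" "y \<in> c ` V" using that c(2) by auto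
        then obtain u w where u: "u \<in> V" "x = c u" and w: "w \<in> V" "y = c w" by blast
        show False
        proof (cases "u = w")
          case True then show ?thesis using xy u w EH_irr by simp
        next
          case False
          then have "{u,w} \<in> E" using nb_between[OF u(1) w(1) False] cL u w xy by blast
          then show ?thesis using c u w xy unfolding col_def by blast
        qed
      qed
      moreover have "inj_on c V"
      proof (rule inj_onI)
        fix u w assume uw: "u \<in> V" "w \<in> V" "c u = c w"
        show "u = w"
        proof (rule ccontr)
          assume "u \<noteq> w"
          then have "L u \<inter> L w = {}" using disj uw by blast
          then show False using cL[OF uw(1)] cL[OF uw(2)] uw(3) by auto
        qed
      qed
      then have "card I = card V" using c by (simp add: card_image)
      ultimately show "I \<in> Is" unfolding Is_def independent_set_def by blast
    qed
  next
    show "Is \<subseteq> (\<lambda>c. c ` V) ` col V"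
    proof
      fix I assume "I \<in> Is"
      then have IVH: "I \<subseteq> VH" and ind: "\<And>x y. x \<in> I \<Longrightarrow> y \<in> I \<Longrightarrow> {x,y} \<notin> EH"
        and cI: "card I = card V"
        unfolding Is_def independent_set_def by auto
      have le1: "card (I \<inter> L u) \<le> 1" if u: "u \<in> V" for u
      proof -
        have "\<forall>x\<in>I \<inter> L u. \<forall>y\<in>I \<inter> L u. x = y" using clique[OF u] ind by blast
        then show ?thesis by (simp add: card_le_Suc0_iff_eq finL u)
      qed
      have Iun: "I = (\<Union>u\<in>V. I \<inter> L u)" using IVH VHdef by blast
      have "card I = (\<Sum>u\<in>V. card (I \<inter> L u))"
        by (subst Iun, rule card_UN_disjoint) (use finV finL disj in auto)
      then have sumeq: "(\<Sum>u\<in>V. card (I \<inter> L u)) = (\<Sum>u\<in>V. 1)" using cI by simp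
      have one: "card (I \<inter> L u) = 1" if u: "u \<in> V" for u
      proof (rule ccontr)
        assume "card (I \<inter> L u) \<noteq> 1"
        then have "card (I \<inter> L u) < 1" using le1[OF u] by linarith
        then have "(\<Sum>u\<in>V. card (I \<inter> L u)) < (\<Sum>u\<in>V. 1)"
          using le1 u finV by (intro sum_strict_mono_ex1) auto
        then show False using sumeq by simp
      qed
      have ex1: "\<exists>!x. x \<in> I \<inter> L u" if "u \<in> V" for u
        using one[OF that] by (metis card_1_singletonE singleton_iff)
      define c where "c u = (if u \<in> V then (THE x. x \<in> I \<inter> L u) else undefined)" for u
      have cu: "c u \<in> I \<inter> L u" if "u \<in> V" for u
        using theI'[OF ex1[OF that]] that unfolding c_def by simp
      have "c \<in> col V" unfolding col_def
      proof (intro CollectI conjI ballI allI impI)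
        fix u assume "u \<in> V" then show "c u \<in> L u" using cu by blast
      next
        fix u assume "u \<notin> V" then show "c u = undefined" unfolding c_def by simp
      next
        fix u w assume "u \<in> V" "w \<in> V"
        then show "{c u, c w} \<notin> EH" using cu ind by blast
      qed
      moreover have "c ` V = I"
      proof
        show "c ` V \<subseteq> I" using cu by blast
        show "I \<subseteq> c ` V"
        proof
          fix x assume x: "x \<in> I"
          then obtain u where u: "u \<in> V" "x \<in> L u" using IVH VHdef by blast
          then have "x = c u" using ex1[OF u(1)] cu[OF u(1)] x by blast
          then show "x \<in> c ` V" using u by blast
        qed
      qed
      ultimately show "I \<in> (\<lambda>c. c ` V) ` col V" by blast
    qed
  qed
  have "P_DP_cover V (VH, EH) = card Is" unfolding P_DP_cover_def Is_def by simp
  also have "\<dots> = card (col V)" using card_image[OF inj] img by simp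
  finally show ?thesis .
qed

end

context cov
begin

lemma tstep:
  assumes W: "W \<subseteq> V" and v: "v \<in> V" "v \<notin> W" and p: "p \<in> W" "{v,p} \<in> E"
    and uniq: "\<And>u. u \<in> W \<Longrightarrow> {v,u} \<in> E \<Longrightarrow> u = p"
  shows "card (col (insert v W)) = (\<Sum>c\<in>col W. card {y \<in> L v. {c p, y} \<notin> EH})"
proof -
  define F :: "('v \<Rightarrow> 'w) \<times> 'w \<Rightarrow> 'v \<Rightarrow> 'w" where "F = (\<lambda>(c, y). c(v := y))"
  define B where "B = (SIGMA c:col W. {y \<in> L v. {c p, y} \<notin> EH})"
  have finB: "finite B" unfolding B_def
    using fin_col[OF W] finL[OF v(1)] by (intro finite_SigmaI) auto
  have inj: "inj_on F B"
  proof (rule inj_onI)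
    fix a b assume a: "a \<in> B" and b: "b \<in> B" and eq: "F a = F b"
    obtain c y where a': "a = (c, y)" "c \<in> col W" using a unfolding B_def by blast
    obtain c' y' where b': "b = (c', y')" "c' \<in> col W" using b unfolding B_def by blast
    have cv: "c v = undefined" "c' v = undefined" using a' b' v unfolding col_def by auto
    have e: "c(v := y) = c'(v := y')" using eq a' b' unfolding F_def by simp
    then have "y = y'" by (metis fun_upd_same)
    moreover have "c = c'"
    proof
      fix u show "c u = c' u"
      proof (cases "u = v")
        case True then show ?thesis using cv by simp
      next
        case False then show ?thesis using fun_cong[OF e, of u] by simp
      qed
    qed
    ultimately show "a = b" using a' b' by simp
  qed
  have pv: "p \<noteq> v" using p v by blast
  have img: "F ` B = col (insert v W)"
  proof
    show "F ` B \<subseteq> col (insert v W)"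
    proof
      fix f assume "f \<in> F ` B"
      then obtain a where a: "a \<in> B" "f = F a" by blast
      then obtain c y where cy: "c \<in> col W" "y \<in> L v" "{c p, y} \<notin> EH" "f = c(v := y)"
        unfolding B_def F_def by (cases a) auto
      have cL: "\<And>u. u \<in> W \<Longrightarrow> c u \<in> L u" and cU: "\<And>u. u \<notin> W \<Longrightarrow> c u = undefined"
        and cE: "\<And>u w. u \<in> W \<Longrightarrow> w \<in> W \<Longrightarrow> {u,w} \<in> E \<Longrightarrow> {c u, c w} \<notin> EH"
        using cy(1) unfolding col_def by auto
      show "f \<in> col (insert v W)" unfolding col_def
      proof (intro CollectI conjI ballI allI impI)
        fix u assume "u \<in> insert v W" then show "f u \<in> L u" using cy cL by auto
      next
        fix u assume "u \<notin> insert v W" then show "f u = undefined" using cy cU by auto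
      next
        fix u w assume u: "u \<in> insert v W" and w: "w \<in> insert v W" and e: "{u,w} \<in> E"
        show "{f u, f w} \<notin> EH"
        proof (cases "u = v")
          case True
          then have wv: "w \<noteq> v" using e edge_irrefl by metis
          then have "w \<in> W" using w by simp
          then have "w = p" using uniq e True by simp
          then show ?thesis using True cy(3,4) pv by (simp add: insert_commute)
        next
          case False
          then have uW: "u \<in> W" using u by simp
          show ?thesis
          proof (cases "w = v")
            case True
            then have "u = p" using uniq e uW by (simp add: insert_commute)
            then show ?thesis using True cy(3,4) pv by simp
          next
            case False
            then have "w \<in> W" using w by simp
            then show ?thesis using cE[OF uW _ e] cy(4) False \<open>u \<noteq> v\<close> by simp
          qed
        qed
      qed
    qed
  next
    show "col (insert v W) \<subseteq> F ` B"
    proof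
      fix f assume f: "f \<in> col (insert v W)"
      have fL: "\<And>u. u \<in> insert v W \<Longrightarrow> f u \<in> L u" and fU: "\<And>u. u \<notin> insert v W \<Longrightarrow> f u = undefined"
        and fE: "\<And>u w. u \<in> insert v W \<Longrightarrow> w \<in> insert v W \<Longrightarrow> {u,w} \<in> E \<Longrightarrow> {f u, f w} \<notin> EH"
        using f unfolding col_def by auto
      define c where "c = f(v := undefined)"
      have "c \<in> col W" unfolding col_def
      proof (intro CollectI conjI ballI allI impI)
        fix u assume "u \<in> W" then show "c u \<in> L u" using fL v unfolding c_def by auto
      next
        fix u assume "u \<notin> W" then show "c u = undefined" using fU unfolding c_def by auto
      next
        fix u w assume "u \<in> W" "w \<in> W" "{u,w} \<in> E"
        then show "{c u, c w} \<notin> EH" using fE v unfolding c_def by auto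
      qed
      moreover have "f v \<in> L v" using fL by simp
      moreover have "{c p, f v} \<notin> EH"
      proof -
        have "{f v, f p} \<notin> EH" using fE[of v p] p by simp
        then show ?thesis using pv unfolding c_def by (simp add: insert_commute)
      qed
      moreover have "f = F (c, f v)" unfolding F_def c_def by simp
      ultimately show "f \<in> F ` B" unfolding B_def by blast
    qed
  qed
  have "card (col (insert v W)) = card B" using card_image[OF inj] img by simp
  also have "\<dots> = (\<Sum>c\<in>col W. card {y \<in> L v. {c p, y} \<notin> EH})"
    unfolding B_def using fin_col[OF W] finL[OF v(1)] by (intro card_SigmaI) auto
  finally show ?thesis .
qed

lemma tbound:
  assumes W: "W \<subseteq> V" and v: "v \<in> V" "v \<notin> W" and p: "p \<in> W" "{v,p} \<in> E"
    and c: "c \<in> col W"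
  shows "card {y \<in> L v. {c p, y} \<notin> EH} \<ge> m - 1"
proof -
  have pV: "p \<in> V" using p W by blast
  have cp: "c p \<in> L p" using c p unfolding col_def by auto
  define N where "N = {y \<in> L v. {c p, y} \<in> EH}"
  have "card N \<le> 1"
  proof -
    have "\<forall>x\<in>N. \<forall>y\<in>N. x = y"
    proof (intro ballI)
      fix x y assume "x \<in> N" "y \<in> N"
      then have "x \<in> L v" "y \<in> L v" "{x, c p} \<in> EH" "{y, c p} \<in> EH"
        unfolding N_def by (auto simp: insert_commute)
      then show "x = y" using nb_unique[OF v(1) pV p(2) cp] by blast
    qed
    then show ?thesis by (simp add: card_le_Suc0_iff_eq finL v(1) N_def)
  qed
  have "{y \<in> L v. {c p, y} \<notin> EH} = L v - N" unfolding N_def by blast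
  moreover have "card (L v - N) = card (L v) - card N"
    using finL[OF v(1)] unfolding N_def by (intro card_Diff_subset) auto
  ultimately show ?thesis using cardL[OF v(1)] \<open>card N \<le> 1\<close> by simp
qed

lemma main_ge:
  assumes m1: "m \<ge> 1" and inv: "inv W"
  shows "int (card (col V)) \<ge> (int m - 1) ^ (card V - card W) * int (card (col W))"
  using inv
proof (induction "card (V - W)" arbitrary: W rule: less_induct)
  case less
  have WV: "W \<subseteq> V" using less.prems unfolding inv_def by simp
  show ?case
  proof (cases "W = V")
    case True then show ?thesis by simp
  next
    case False
    then obtain v p where v: "v \<in> V - W" and p: "p \<in> W" "{v,p} \<in> E"
      using edge_out[OF less.prems] by blast
    have uniq: "\<And>u. u \<in> W \<Longrightarrow> {v,u} \<in> E \<Longrightarrow> u = p"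
      using unique_nbr[OF less.prems] v p by blast
    have inv': "inv (insert v W)" using inv_insert[OF less.prems] v p by blast
    have fW: "finite W" using WV finV finite_subset by blast
    have lt: "card (V - insert v W) < card (V - W)"
      using v finV by (metis Diff_insert card_Diff1_less finite_Diff)
    have IH: "int (card (col V)) \<ge> (int m - 1) ^ (card V - card (insert v W)) * int (card (col (insert v W)))"
      using less.hyps[OF lt inv'] .
    have step: "int (card (col (insert v W))) \<ge> (int m - 1) * int (card (col W))"
    proof -
      have "card (col (insert v W)) = (\<Sum>c\<in>col W. card {y \<in> L v. {c p, y} \<notin> EH})"
        using tstep[OF WV] v p uniq by blast
      also have "\<dots> \<ge> (\<Sum>c\<in>col W. m - 1)"
        using tbound[OF WV] v p by (intro sum_mono) blast
      finally have "card (col (insert v W)) \<ge> (m - 1) * card (col W)" by (simp add: mult.commute)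
      then have "int ((m - 1) * card (col W)) \<le> int (card (col (insert v W)))" by (simp only: of_nat_le_iff)
      then show ?thesis using m1 by (simp add: of_nat_diff)
    qed
    have "W \<subset> V" using v WV by blast
    then have "card W < card V" by (rule psubset_card_mono[OF finV])
    moreover have "card (insert v W) = Suc (card W)" using v fW by (simp add: card_insert_disjoint)
    ultimately have cV: "card V - card W = Suc (card V - card (insert v W))" by linarith
    have pos: "(int m - 1) ^ (card V - card (insert v W)) \<ge> 0" using m1 by simp
    have "(int m - 1) ^ (card V - card W) * int (card (col W))
        = (int m - 1) ^ (card V - card (insert v W)) * ((int m - 1) * int (card (col W)))"
      using cV by simp
    also have "\<dots> \<le> (int m - 1) ^ (card V - card (insert v W)) * int (card (col (insert v W)))"
      using step pos by (intro mult_left_mono) auto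
    also have "\<dots> \<le> int (card (col V))" using IH .
    finally show ?thesis .
  qed
qed

lemma main_eq:
  assumes inv: "inv W"
    and ex: "\<And>W v p c. inv W \<Longrightarrow> v \<in> V \<Longrightarrow> v \<notin> W \<Longrightarrow> p \<in> W \<Longrightarrow> {v,p} \<in> E \<Longrightarrow> c \<in> col W
      \<Longrightarrow> card {y \<in> L v. {c p, y} \<notin> EH} = m - 1"
  shows "card (col V) = (m - 1) ^ (card V - card W) * card (col W)"
  using inv
proof (induction "card (V - W)" arbitrary: W rule: less_induct)
  case less
  have WV: "W \<subseteq> V" using less.prems unfolding inv_def by simp
  show ?case
  proof (cases "W = V")
    case True then show ?thesis by simp
  next
    case False
    then obtain v p where v: "v \<in> V - W" and p: "p \<in> W" "{v,p} \<in> E"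
      using edge_out[OF less.prems] by blast
    have uniq: "\<And>u. u \<in> W \<Longrightarrow> {v,u} \<in> E \<Longrightarrow> u = p"
      using unique_nbr[OF less.prems] v p by blast
    have inv': "inv (insert v W)" using inv_insert[OF less.prems] v p by blast
    have fW: "finite W" using WV finV finite_subset by blast
    have lt: "card (V - insert v W) < card (V - W)"
      using v finV by (metis Diff_insert card_Diff1_less finite_Diff)
    have IH: "card (col V) = (m - 1) ^ (card V - card (insert v W)) * card (col (insert v W))"
      using less.hyps[OF lt inv'] .
    have step: "card (col (insert v W)) = (m - 1) * card (col W)"
    proof -
      have "card (col (insert v W)) = (\<Sum>c\<in>col W. card {y \<in> L v. {c p, y} \<notin> EH})"
        using tstep[OF WV] v p uniq by blast
      also have "\<dots> = (\<Sum>c\<in>col W. m - 1)"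
        using ex[OF less.prems] v p by (intro sum.cong) auto
      finally show ?thesis by simp
    qed
    have "W \<subset> V" using v WV by blast
    then have "card W < card V" by (rule psubset_card_mono[OF finV])
    moreover have "card (insert v W) = Suc (card W)" using v fW by (simp add: card_insert_disjoint)
    ultimately have cV: "card V - card W = Suc (card V - card (insert v W))" by linarith
    show ?thesis using IH step cV by simp
  qed
qed

end

context cov
begin

lemma xsV: "i < l \<Longrightarrow> xs ! i \<in> V" using SV nth_mem by blast
lemma finLi: "i < l \<Longrightarrow> finite (L (xs ! i))" using finL xsV by blast

definition paths :: "'w \<Rightarrow> nat \<Rightarrow> 'w \<Rightarrow> 'w list set" where
  "paths x j z = {cs. length cs = Suc j \<and> (\<forall>i\<le>j. cs ! i \<in> L (xs ! i)) \<and>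
      (\<forall>i<j. {cs ! i, cs ! Suc i} \<notin> EH) \<and> cs ! 0 = x \<and> cs ! j = z}"

fun g :: "'w \<Rightarrow> nat \<Rightarrow> 'w \<Rightarrow> int" where
  "g x 0 z = (if z = x then 1 else 0)"
| "g x (Suc j) z = (\<Sum>y\<in>{y \<in> L (xs ! j). {y, z} \<notin> EH}. g x j y)"

lemma fin_paths:
  assumes "j < l" shows "finite (paths x j z)"
proof -
  have "paths x j z \<subseteq> {cs. set cs \<subseteq> VH \<and> length cs = Suc j}"
  proof
    fix cs assume cs: "cs \<in> paths x j z"
    have "set cs \<subseteq> VH"
    proof
      fix y assume "y \<in> set cs"
      then obtain i where i: "i < length cs" "y = cs ! i" by (auto simp: in_set_conv_nth)
      then have "i \<le> j" using cs unfolding paths_def by simp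
      then have "y \<in> L (xs ! i)" using cs i unfolding paths_def by simp
      moreover have "i < l" using \<open>i \<le> j\<close> assms by simp
      ultimately show "y \<in> VH" using LVH xsV by blast
    qed
    then show "cs \<in> {cs. set cs \<subseteq> VH \<and> length cs = Suc j}" using cs unfolding paths_def by simp
  qed
  moreover have "finite {cs. set cs \<subseteq> VH \<and> length cs = Suc j}"
    using finite_lists_length_eq[OF finVH] .
  ultimately show ?thesis using finite_subset by blast
qed

lemma paths_0:
  assumes "x \<in> L (xs ! 0)"
  shows "paths x 0 z = (if z = x then {[x]} else {})"
  using assms unfolding paths_def
  by (auto simp: length_Suc_conv)

lemma paths_Suc:
  assumes z: "z \<in> L (xs ! Suc j)"
  shows "paths x (Suc j) z = (\<Union>y\<in>{y \<in> L (xs ! j). {y, z} \<notin> EH}. (\<lambda>cs. cs @ [z]) ` paths x j y)"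
proof
  show "paths x (Suc j) z \<subseteq> (\<Union>y\<in>{y \<in> L (xs ! j). {y, z} \<notin> EH}. (\<lambda>cs. cs @ [z]) ` paths x j y)"
  proof
    fix cs assume cs: "cs \<in> paths x (Suc j) z"
    have len: "length cs = Suc (Suc j)" and cL: "\<And>i. i \<le> Suc j \<Longrightarrow> cs ! i \<in> L (xs ! i)"
      and cE: "\<And>i. i < Suc j \<Longrightarrow> {cs ! i, cs ! Suc i} \<notin> EH" and c0: "cs ! 0 = x"
      and cz: "cs ! Suc j = z"
      using cs unfolding paths_def by auto
    define ds where "ds = take (Suc j) cs"
    have eq: "cs = ds @ [z]"
      unfolding ds_def using len cz
      by (metis lessI take_Suc_conv_app_nth take_all order_refl)
    have dsn: "\<And>i. i \<le> j \<Longrightarrow> ds ! i = cs ! i" unfolding ds_def by simp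
    have "ds \<in> paths x j (cs ! j)"
      unfolding paths_def using len cL cE c0 dsn by (auto simp: ds_def)
    moreover have "cs ! j \<in> L (xs ! j)" using cL by simp
    moreover have "{cs ! j, z} \<notin> EH" using cE[of j] cz by simp
    ultimately show "cs \<in> (\<Union>y\<in>{y \<in> L (xs ! j). {y, z} \<notin> EH}. (\<lambda>cs. cs @ [z]) ` paths x j y)"
      using eq by blast
  qed
next
  show "(\<Union>y\<in>{y \<in> L (xs ! j). {y, z} \<notin> EH}. (\<lambda>cs. cs @ [z]) ` paths x j y) \<subseteq> paths x (Suc j) z"
  proof
    fix cs assume "cs \<in> (\<Union>y\<in>{y \<in> L (xs ! j). {y, z} \<notin> EH}. (\<lambda>cs. cs @ [z]) ` paths x j y)"
    then obtain y ds where y: "y \<in> L (xs ! j)" "{y, z} \<notin> EH" and ds: "ds \<in> paths x j y"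
      and eq: "cs = ds @ [z]" by blast
    have len: "length ds = Suc j" and dL: "\<And>i. i \<le> j \<Longrightarrow> ds ! i \<in> L (xs ! i)"
      and dE: "\<And>i. i < j \<Longrightarrow> {ds ! i, ds ! Suc i} \<notin> EH" and d0: "ds ! 0 = x"
      and dz: "ds ! j = y"
      using ds unfolding paths_def by auto
    have n1: "\<And>i. i \<le> j \<Longrightarrow> cs ! i = ds ! i" using eq len by (simp add: nth_append)
    have n2: "cs ! Suc j = z" using eq len by (simp add: nth_append)
    show "cs \<in> paths x (Suc j) z" unfolding paths_def
    proof (intro CollectI conjI allI impI)
      show "length cs = Suc (Suc j)" using eq len by simp
      fix i assume "i \<le> Suc j"
      then show "cs ! i \<in> L (xs ! i)"
        using n1 n2 dL z by (cases "i = Suc j") auto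
    next
      fix i assume i: "i < Suc j"
      show "{cs ! i, cs ! Suc i} \<notin> EH"
      proof (cases "i = j")
        case True then show ?thesis using n1 n2 dz y by simp
      next
        case False then show ?thesis using n1 dE i by simp
      qed
    next
      show "cs ! 0 = x" using n1 d0 by simp
      show "cs ! Suc j = z" using n2 .
    qed
  qed
qed

lemma card_paths:
  assumes "j < l" "x \<in> L (xs ! 0)" "z \<in> L (xs ! j)"
  shows "int (card (paths x j z)) = g x j z"
  using assms
proof (induction j arbitrary: z)
  case 0 then show ?case by (simp add: paths_0)
next
  case (Suc j)
  define Y where "Y = {y \<in> L (xs ! j). {y, z} \<notin> EH}"
  have finY: "finite Y" unfolding Y_def using finLi Suc.prems by simp
  have "card (paths x (Suc j) z) = card (\<Union>y\<in>Y. (\<lambda>cs. cs @ [z]) ` paths x j y)"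
    using paths_Suc[OF Suc.prems(3)] unfolding Y_def by simp
  also have "\<dots> = (\<Sum>y\<in>Y. card ((\<lambda>cs. cs @ [z]) ` paths x j y))"
  proof (rule card_UN_disjoint[OF finY])
    show "\<forall>y\<in>Y. finite ((\<lambda>cs. cs @ [z]) ` paths x j y)" using fin_paths Suc.prems by simp
    show "\<forall>y\<in>Y. \<forall>y'\<in>Y. y \<noteq> y' \<longrightarrow> (\<lambda>cs. cs @ [z]) ` paths x j y \<inter> (\<lambda>cs. cs @ [z]) ` paths x j y' = {}"
      unfolding paths_def by auto
  qed
  also have "\<dots> = (\<Sum>y\<in>Y. card (paths x j y))"
    by (intro sum.cong refl card_image) (auto intro: inj_onI)
  finally have "int (card (paths x (Suc j) z)) = (\<Sum>y\<in>Y. int (card (paths x j y)))" by simp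
  also have "\<dots> = (\<Sum>y\<in>Y. g x j y)"
    using Suc.IH Suc.prems unfolding Y_def by (intro sum.cong) auto
  finally show ?case unfolding Y_def by simp
qed

definition cyc_lists :: "'w list set" where
  "cyc_lists = {cs. length cs = l \<and> (\<forall>i<l. cs ! i \<in> L (xs ! i)) \<and>
      (\<forall>i<l. {cs ! i, cs ! ((i + 1) mod l)} \<notin> EH)}"

definition idx :: "'v \<Rightarrow> nat" where
  "idx u = (THE i. i < l \<and> xs ! i = u)"

lemma idx_nth: "i < l \<Longrightarrow> idx (xs ! i) = i"
  unfolding idx_def using dist by (intro the_equality) (auto simp: nth_eq_iff_index_eq)

lemma idx: assumes "u \<in> S" shows "idx u < l" "xs ! idx u = u"
proof -
  obtain i where "i < l" "xs ! i = u" using assms by (auto simp: in_set_conv_nth)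
  then show "idx u < l" "xs ! idx u = u" using idx_nth by auto
qed

lemma card_col_S: "card (col S) = card cyc_lists"
proof -
  have inj: "inj_on (\<lambda>c. map c xs) (col S)"
  proof (rule inj_onI)
    fix c c' assume c: "c \<in> col S" and c': "c' \<in> col S" and eq: "map c xs = map c' xs"
    show "c = c'"
    proof
      fix u show "c u = c' u"
      proof (cases "u \<in> S")
        case True then show ?thesis using eq by (metis map_eq_conv)
      next
        case False then show ?thesis using c c' unfolding col_def by auto
      qed
    qed
  qed
  have img: "(\<lambda>c. map c xs) ` col S = cyc_lists"
  proof
    show "(\<lambda>c. map c xs) ` col S \<subseteq> cyc_lists"
    proof
      fix cs assume "cs \<in> (\<lambda>c. map c xs) ` col S"
      then obtain c where c: "c \<in> col S" "cs = map c xs" by blast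
      have cL: "\<And>u. u \<in> S \<Longrightarrow> c u \<in> L u"
        and cE: "\<And>u w. u \<in> S \<Longrightarrow> w \<in> S \<Longrightarrow> {u,w} \<in> E \<Longrightarrow> {c u, c w} \<notin> EH"
        using c(1) unfolding col_def by auto
      show "cs \<in> cyc_lists" unfolding cyc_lists_def
      proof (intro CollectI conjI allI impI)
        show "length cs = l" using c by simp
        fix i assume i: "i < l" then show "cs ! i \<in> L (xs ! i)" using c cL by simp
      next
        fix i assume i: "i < l"
        have "0 < l" using i by linarith
        then have i2: "(i + 1) mod l < l" by (rule mod_less_divisor)
        have "{c (xs ! i), c (xs ! ((i + 1) mod l))} \<notin> EH"
          using cE[OF nth_mem[OF i] nth_mem[OF i2] cyc_edge[OF i]] .
        then show "{cs ! i, cs ! ((i + 1) mod l)} \<notin> EH" using c(2) i i2 by simp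
      qed
    qed
  next
    show "cyc_lists \<subseteq> (\<lambda>c. map c xs) ` col S"
    proof
      fix cs assume cs: "cs \<in> cyc_lists"
      have len: "length cs = l" and csL: "\<And>i. i < l \<Longrightarrow> cs ! i \<in> L (xs ! i)"
        and csE: "\<And>i. i < l \<Longrightarrow> {cs ! i, cs ! ((i + 1) mod l)} \<notin> EH"
        using cs unfolding cyc_lists_def by auto
      define c where "c u = (if u \<in> S then cs ! idx u else undefined)" for u
      have cn: "\<And>i. i < l \<Longrightarrow> c (xs ! i) = cs ! i" unfolding c_def using idx_nth by simp
      have "c \<in> col S" unfolding col_def
      proof (intro CollectI conjI ballI allI impI)
        fix u assume u: "u \<in> S"
        show "c u \<in> L u" using csL[OF idx(1)[OF u]] idx(2)[OF u] u unfolding c_def by simp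
      next
        fix u assume "u \<notin> S" then show "c u = undefined" unfolding c_def by simp
      next
        fix u w assume u: "u \<in> S" and w: "w \<in> S" and e: "{u,w} \<in> E"
        obtain t where t: "t < l" "{u,w} = {xs ! t, xs ! ((t + 1) mod l)}"
          using S_edge[OF u w e] by blast
        have "0 < l" using t by linarith
        then have t2: "(t + 1) mod l < l" by (rule mod_less_divisor)
        have "{c (xs ! t), c (xs ! ((t + 1) mod l))} \<notin> EH"
          using csE[OF t(1)] cn[OF t(1)] cn[OF t2] by simp
        moreover have "{c u, c w} = {c (xs ! t), c (xs ! ((t + 1) mod l))}"
          using t(2) by (auto simp: doubleton_eq_iff)
        ultimately show "{c u, c w} \<notin> EH" by simp
      qed
      moreover have "map c xs = cs" using len cn by (intro nth_equalityI) auto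
      ultimately show "cs \<in> (\<lambda>c. map c xs) ` col S" by blast
    qed
  qed
  show ?thesis using card_image[OF inj] img by simp
qed

lemma cyc_lists_UN:
  "cyc_lists = (\<Union>x\<in>L (xs ! 0). \<Union>z\<in>{z \<in> L (xs ! (l - 1)). {z, x} \<notin> EH}. paths x (l - 1) z)"
proof -
  have l1: "Suc (l - 1) = l" using l3 by simp
  have l0: "0 < l" "l - 1 < l" using l3 by linarith+
  have md: "\<And>i. i < l - 1 \<Longrightarrow> (i + 1) mod l = Suc i" by simp
  have l1': "Suc (l - Suc 0) = l" using l3 by simp
  have md2: "(l - 1 + 1) mod l = 0" using l1' by simp
  show ?thesis
  proof (intro set_eqI iffI)
    fix cs assume cs: "cs \<in> cyc_lists"
    have len: "length cs = l" and csL: "\<And>i. i < l \<Longrightarrow> cs ! i \<in> L (xs ! i)"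
      and csE: "\<And>i. i < l \<Longrightarrow> {cs ! i, cs ! ((i + 1) mod l)} \<notin> EH"
      using cs unfolding cyc_lists_def by auto
    have "cs \<in> paths (cs ! 0) (l - 1) (cs ! (l - 1))"
      unfolding paths_def
    proof (intro CollectI conjI allI impI refl)
      show "length cs = Suc (l - 1)" using len l1 by simp
      fix i assume "i \<le> l - 1"
      then have "i < l" using l0 by linarith
      then show "cs ! i \<in> L (xs ! i)" using csL by simp
    next
      fix i assume i: "i < l - 1" then show "{cs ! i, cs ! Suc i} \<notin> EH" using csE[of i] md[OF i] by simp
    qed
    moreover have "cs ! 0 \<in> L (xs ! 0)" using csL l0 by simp
    moreover have "cs ! (l - 1) \<in> L (xs ! (l - 1))" using csL l0 by simp
    moreover have "{cs ! (l - 1), cs ! 0} \<notin> EH" using csE[of "l - 1"] md2 l0 by simp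
    ultimately show "cs \<in> (\<Union>x\<in>L (xs ! 0). \<Union>z\<in>{z \<in> L (xs ! (l - 1)). {z, x} \<notin> EH}. paths x (l - 1) z)"
      by blast
  next
    fix cs assume "cs \<in> (\<Union>x\<in>L (xs ! 0). \<Union>z\<in>{z \<in> L (xs ! (l - 1)). {z, x} \<notin> EH}. paths x (l - 1) z)"
    then obtain x z where x: "x \<in> L (xs ! 0)" and z: "z \<in> L (xs ! (l - 1))" "{z, x} \<notin> EH"
      and cs: "cs \<in> paths x (l - 1) z" by blast
    have len: "length cs = l" and csL: "\<And>i. i \<le> l - 1 \<Longrightarrow> cs ! i \<in> L (xs ! i)"
      and csE: "\<And>i. i < l - 1 \<Longrightarrow> {cs ! i, cs ! Suc i} \<notin> EH" and c0: "cs ! 0 = x"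
      and cz: "cs ! (l - 1) = z"
      using cs l1 unfolding paths_def by auto
    show "cs \<in> cyc_lists" unfolding cyc_lists_def
    proof (intro CollectI conjI allI impI)
      show "length cs = l" using len .
      fix i assume "i < l" then show "cs ! i \<in> L (xs ! i)" using csL by simp
    next
      fix i assume i: "i < l"
      show "{cs ! i, cs ! ((i + 1) mod l)} \<notin> EH"
      proof (cases "i = l - 1")
        case True then show ?thesis using md2 c0 cz z by simp
      next
        case False then have "i < l - 1" using i by simp
        then show ?thesis using csE md by simp
      qed
    qed
  qed
qed

lemma cnt_S:
  "int (card (col S)) = (\<Sum>x\<in>L (xs ! 0). \<Sum>z\<in>{z \<in> L (xs ! (l - 1)). {z, x} \<notin> EH}. g x (l - 1) z)"
proof -
  have l0: "0 < l" "l - 1 < l" using l3 by linarith+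
  have fin0: "finite (L (xs ! 0))" using finLi l0 by simp
  have fin1: "finite (L (xs ! (l - 1)))" using finLi l0 by simp
  let ?Z = "\<lambda>x. {z \<in> L (xs ! (l - 1)). {z, x} \<notin> EH}"
  have "card cyc_lists = (\<Sum>x\<in>L (xs ! 0). card (\<Union>z\<in>?Z x. paths x (l - 1) z))"
    unfolding cyc_lists_UN
  proof (rule card_UN_disjoint[OF fin0])
    show "\<forall>x\<in>L (xs ! 0). finite (\<Union>z\<in>?Z x. paths x (l - 1) z)"
      using fin1 fin_paths l0 by auto
    show "\<forall>x\<in>L (xs ! 0). \<forall>x'\<in>L (xs ! 0). x \<noteq> x' \<longrightarrow>
        (\<Union>z\<in>?Z x. paths x (l - 1) z) \<inter> (\<Union>z\<in>?Z x'. paths x' (l - 1) z) = {}"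
      unfolding paths_def by auto
  qed
  also have "\<dots> = (\<Sum>x\<in>L (xs ! 0). \<Sum>z\<in>?Z x. card (paths x (l - 1) z))"
  proof (rule sum.cong[OF refl])
    fix x assume "x \<in> L (xs ! 0)"
    show "card (\<Union>z\<in>?Z x. paths x (l - 1) z) = (\<Sum>z\<in>?Z x. card (paths x (l - 1) z))"
    proof (rule card_UN_disjoint)
      show "finite (?Z x)" using fin1 by simp
      show "\<forall>z\<in>?Z x. finite (paths x (l - 1) z)" using fin_paths l0 by auto
      show "\<forall>z\<in>?Z x. \<forall>z'\<in>?Z x. z \<noteq> z' \<longrightarrow> paths x (l - 1) z \<inter> paths x (l - 1) z' = {}"
        unfolding paths_def by auto
    qed
  qed
  finally have "int (card cyc_lists) = (\<Sum>x\<in>L (xs ! 0). \<Sum>z\<in>?Z x. int (card (paths x (l - 1) z)))"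
    by simp
  also have "\<dots> = (\<Sum>x\<in>L (xs ! 0). \<Sum>z\<in>?Z x. g x (l - 1) z)"
    using card_paths l0 by (intro sum.cong refl) auto
  finally show ?thesis using card_col_S by simp
qed

end

fun r :: "int \<Rightarrow> nat \<Rightarrow> int" where
  "r M 0 = 0"
| "r M (Suc 0) = 0"
| "r M (Suc (Suc n)) = r M n + (M - 2) * (M - 1) ^ n"

lemma r_closed: "M * r M n = (M - 1) ^ n - (if even n then 1 else M - 1)"
proof (induction M n rule: r.induct)
  case (3 M n)
  have "M * r M (Suc (Suc n)) = M * r M n + M * (M - 2) * (M - 1) ^ n" by (simp add: algebra_simps)
  also have "\<dots> = (M - 1) ^ n - (if even n then 1 else M - 1) + M * (M - 2) * (M - 1) ^ n"
    using 3 by simp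
  also have "\<dots> = (M - 1) ^ Suc (Suc n) - (if even (Suc (Suc n)) then 1 else M - 1)"
    by (simp add: algebra_simps power2_eq_square)
  finally show ?case .
qed auto

lemma sum_le_single:
  fixes f :: "'a \<Rightarrow> int"
  assumes "A \<subseteq> {a}" "\<And>z. f z \<ge> 0"
  shows "sum f A \<le> f a"
proof (cases "A = {}")
  case True then show ?thesis using assms by simp
next
  case False then have "A = {a}" using assms by blast
  then show ?thesis by simp
qed

context cov
begin

definition T :: "'w \<Rightarrow> nat \<Rightarrow> int" where
  "T x j = (\<Sum>z\<in>L (xs ! j). g x j z)"

lemma g_nonneg: "g x j z \<ge> 0"
  by (induction j arbitrary: z) (auto intro: sum_nonneg)

lemma g_Suc_alt:
  assumes "j < l"
  shows "g x (Suc j) z = T x j - (\<Sum>y\<in>{y \<in> L (xs ! j). {y, z} \<in> EH}. g x j y)"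
proof -
  have fin: "finite (L (xs ! j))" using finLi assms .
  have "{y \<in> L (xs ! j). {y, z} \<notin> EH} = L (xs ! j) - {y \<in> L (xs ! j). {y, z} \<in> EH}" by blast
  then have "g x (Suc j) z = (\<Sum>y\<in>L (xs ! j) - {y \<in> L (xs ! j). {y, z} \<in> EH}. g x j y)" by simp
  also have "\<dots> = T x j - (\<Sum>y\<in>{y \<in> L (xs ! j). {y, z} \<in> EH}. g x j y)"
    unfolding T_def using fin by (intro sum_diff) auto
  finally show ?thesis .
qed

lemma double_count:
  assumes "finite A" "finite Z"
  shows "(\<Sum>z\<in>Z. \<Sum>y\<in>{y \<in> A. P y z}. (f y :: int)) = (\<Sum>y\<in>A. f y * int (card {z \<in> Z. P y z}))"
proof -
  have "(\<Sum>z\<in>Z. \<Sum>y\<in>{y \<in> A. P y z}. f y) = (\<Sum>z\<in>Z. \<Sum>y\<in>A. if P y z then f y else 0)"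
    using assms by (intro sum.cong refl sum.inter_filter)
  also have "\<dots> = (\<Sum>y\<in>A. \<Sum>z\<in>Z. if P y z then f y else 0)" by (rule sum.swap)
  also have "\<dots> = (\<Sum>y\<in>A. \<Sum>z\<in>{z \<in> Z. P y z}. f y)"
    using assms by (intro sum.cong refl sum.inter_filter[symmetric])
  also have "\<dots> = (\<Sum>y\<in>A. f y * int (card {z \<in> Z. P y z}))" by (simp add: mult.commute)
  finally show ?thesis .
qed

lemma card_le1: "finite A \<Longrightarrow> (\<And>a b. a \<in> A \<Longrightarrow> b \<in> A \<Longrightarrow> a = b) \<Longrightarrow> card A \<le> 1"
  by (simp add: card_le_Suc0_iff_eq)

lemma consec:
  assumes "Suc j < l"
  shows "{xs ! j, xs ! Suc j} \<in> E" "xs ! j \<in> V" "xs ! Suc j \<in> V"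
proof -
  have "(j + 1) mod l = Suc j" using assms by simp
  then show "{xs ! j, xs ! Suc j} \<in> E" using cyc_edge[of j] assms by simp
  show "xs ! j \<in> V" "xs ! Suc j \<in> V" using xsV assms by auto
qed

lemma lower_inv:
  assumes m2: "m \<ge> 2" and x: "x \<in> L (xs ! 0)" and j: "j < l"
  shows "T x j \<ge> (int m - 1) ^ j \<and> (\<forall>z\<in>L (xs ! j). T x j - g x j z \<ge> r (int m) (Suc j))
         \<and> (\<forall>z\<in>L (xs ! j). g x j z \<ge> r (int m) j)"
  using j
proof (induction j)
  case 0
  have "T x 0 = 1" unfolding T_def using x finLi[of 0] 0 by (simp add: sum.delta')
  moreover have "g x 0 z \<le> 1" for z by simp
  ultimately show ?case using g_nonneg by auto
next
  case (Suc j)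
  have jl: "j < l" using Suc.prems by simp
  note IH = Suc.IH[OF jl]
  define A where "A = L (xs ! j)"
  define B where "B = L (xs ! Suc j)"
  have finA: "finite A" unfolding A_def using finLi jl .
  have finB: "finite B" unfolding B_def using finLi Suc.prems .
  have cA: "card A = m" unfolding A_def using cardL consec[OF Suc.prems] by simp
  have cB: "card B = m" unfolding B_def using cardL consec[OF Suc.prems] by simp
  have TA: "T x j = (\<Sum>y\<in>A. g x j y)" unfolding T_def A_def ..
  have nbA: "card {y \<in> A. {y, z} \<in> EH} \<le> 1" if z: "z \<in> B" for z
    using finA nb_unique[OF consec(2)[OF Suc.prems] consec(3)[OF Suc.prems] consec(1)[OF Suc.prems] z[unfolded B_def]] by (intro card_le1) (auto simp: A_def)
  have nbB: "card {z \<in> Z. {y, z} \<in> EH} \<le> 1" if y: "y \<in> A" and Z: "Z \<subseteq> B" for y Z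
  proof (rule card_le1)
    show "finite {z \<in> Z. {y, z} \<in> EH}" using finite_subset[OF Z finB] by simp
    fix a b assume a: "a \<in> {z \<in> Z. {y, z} \<in> EH}" and b: "b \<in> {z \<in> Z. {y, z} \<in> EH}"
    have e: "{xs ! Suc j, xs ! j} \<in> E" using consec[OF Suc.prems] by (simp add: insert_commute)
    show "a = b"
      using nb_unique[OF consec(3)[OF Suc.prems] consec(2)[OF Suc.prems] e, of y a b] a b y Z
      by (auto simp: A_def B_def insert_commute)
  qed
  have gS: "g x (Suc j) z = T x j - (\<Sum>y\<in>{y \<in> A. {y, z} \<in> EH}. g x j y)" for z
    using g_Suc_alt[OF jl] unfolding A_def .
  have sumZ: "(\<Sum>z\<in>Z. g x (Suc j) z) = int (card Z) * T x j - (\<Sum>y\<in>A. g x j y * int (card {z \<in> Z. {y, z} \<in> EH}))"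
    if Z: "Z \<subseteq> B" for Z
  proof -
    have fZ: "finite Z" using Z finB finite_subset by blast
    have "(\<Sum>z\<in>Z. g x (Suc j) z) = (\<Sum>z\<in>Z. T x j - (\<Sum>y\<in>{y \<in> A. {y, z} \<in> EH}. g x j y))"
      by (rule sum.cong[OF refl], rule gS)
    also have "\<dots> = (\<Sum>z\<in>Z. T x j) - (\<Sum>z\<in>Z. \<Sum>y\<in>{y \<in> A. {y, z} \<in> EH}. g x j y)"
      by (rule sum_subtractf)
    also have "(\<Sum>z\<in>Z. \<Sum>y\<in>{y \<in> A. {y, z} \<in> EH}. g x j y) = (\<Sum>y\<in>A. g x j y * int (card {z \<in> Z. {y, z} \<in> EH}))"
      using double_count[OF finA fZ] .
    finally show ?thesis by simp
  qed
  have I3: "g x (Suc j) z \<ge> r (int m) (Suc j)" if z: "z \<in> B" for z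
  proof -
    have "A \<noteq> {}" using cA m2 by auto
    then obtain y where y: "y \<in> A" "{y' \<in> A. {y', z} \<in> EH} \<subseteq> {y}"
    proof (cases "\<exists>y\<in>A. {y, z} \<in> EH")
      case True
      then obtain y where "y \<in> A" "{y, z} \<in> EH" by blast
      moreover have "{y' \<in> A. {y', z} \<in> EH} \<subseteq> {y}"
        using nb_unique[OF consec(2)[OF Suc.prems] consec(3)[OF Suc.prems] consec(1)[OF Suc.prems] z[unfolded B_def]] calculation by (auto simp: A_def)
      ultimately show ?thesis using that by blast
    next
      case False
      then show ?thesis using that \<open>A \<noteq> {}\<close> by blast
    qed
    have "(\<Sum>y\<in>{y' \<in> A. {y', z} \<in> EH}. g x j y) \<le> g x j y"
      using sum_le_single[OF y(2)] g_nonneg by blast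
    then have "g x (Suc j) z \<ge> T x j - g x j y" using gS by simp
    moreover have "T x j - g x j y \<ge> r (int m) (Suc j)" using IH y(1) unfolding A_def by blast
    ultimately show ?thesis by simp
  qed
  have TS: "T x (Suc j) = (\<Sum>z\<in>B. g x (Suc j) z)" unfolding T_def B_def ..
  have I1: "T x (Suc j) \<ge> (int m - 1) ^ Suc j"
  proof -
    have "(\<Sum>y\<in>A. g x j y * int (card {z \<in> B. {y, z} \<in> EH})) \<le> (\<Sum>y\<in>A. g x j y)"
    proof (rule sum_mono)
      fix y assume y: "y \<in> A"
      have "int (card {z \<in> B. {y, z} \<in> EH}) \<le> 1" using nbB[OF y] by simp
      then show "g x j y * int (card {z \<in> B. {y, z} \<in> EH}) \<le> g x j y"
        using g_nonneg[of x j y] by (simp add: mult_left_le)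
    qed
    then have "T x (Suc j) \<ge> int m * T x j - T x j" using sumZ[of B] TS cB TA by simp
    then have "T x (Suc j) \<ge> (int m - 1) * T x j" by (simp add: algebra_simps)
    moreover have "(int m - 1) * T x j \<ge> (int m - 1) * (int m - 1) ^ j"
      using IH m2 by (intro mult_left_mono) auto
    ultimately show ?thesis by simp
  qed
  have I2: "T x (Suc j) - g x (Suc j) z0 \<ge> r (int m) (Suc (Suc j))" if z0: "z0 \<in> B" for z0
  proof -
    define Z where "Z = B - {z0}"
    have ZB: "Z \<subseteq> B" unfolding Z_def by blast
    have fZ: "finite Z" using finB unfolding Z_def by simp
    have cZ: "card Z = m - 1" unfolding Z_def using cB z0 finB by simp
    have TZ: "T x (Suc j) - g x (Suc j) z0 = (\<Sum>z\<in>Z. g x (Suc j) z)"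
      unfolding TS Z_def using finB z0 by (simp add: sum_diff1)
    define Y where "Y = (\<Union>z\<in>Z. {y \<in> A. {y, z} \<in> EH})"
    have "card Y \<le> (\<Sum>z\<in>Z. card {y \<in> A. {y, z} \<in> EH})" unfolding Y_def using fZ by (rule card_UN_le)
    also have "\<dots> \<le> (\<Sum>z\<in>Z. 1)" using nbA ZB by (intro sum_mono) auto
    finally have "card Y < card A" using cZ cA m2 by simp
    moreover have "finite Y" using finA unfolding Y_def by (rule finite_subset[rotated]) blast
    ultimately have "\<not> A \<subseteq> Y" using card_mono leD by blast
    then obtain y0 where y0: "y0 \<in> A" "y0 \<notin> Y" by blast
    have c0: "{z \<in> Z. {y0, z} \<in> EH} = {}" using y0 unfolding Y_def by blast
    have "(\<Sum>y\<in>A. g x j y * int (card {z \<in> Z. {y, z} \<in> EH})) \<le> (\<Sum>y\<in>A. if y = y0 then 0 else g x j y)"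
    proof (rule sum_mono)
      fix y assume y: "y \<in> A"
      show "g x j y * int (card {z \<in> Z. {y, z} \<in> EH}) \<le> (if y = y0 then 0 else g x j y)"
      proof (cases "y = y0")
        case True then show ?thesis using c0 by (simp del: Collect_empty_eq)
      next
        case False
        have "int (card {z \<in> Z. {y, z} \<in> EH}) \<le> 1" using nbB[OF y ZB] by simp
        then show ?thesis using False g_nonneg[of x j y] by (simp add: mult_left_le)
      qed
    qed
    also have "\<dots> = T x j - g x j y0"
    proof -
      have "(\<Sum>y\<in>A. if y = y0 then 0 else g x j y) = (\<Sum>y\<in>A - {y0}. g x j y)"
        using finA y0(1) by (simp add: sum.If_cases Diff_eq)
      also have "\<dots> = T x j - g x j y0" using finA y0(1) TA by (simp add: sum_diff1)
      finally show ?thesis .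
    qed
    finally have "(\<Sum>z\<in>Z. g x (Suc j) z) \<ge> int (m - 1) * T x j - (T x j - g x j y0)"
      using sumZ[OF ZB] cZ by simp
    then have "(\<Sum>z\<in>Z. g x (Suc j) z) \<ge> (int m - 2) * T x j + g x j y0"
      using m2 by (simp add: of_nat_diff algebra_simps)
    moreover have "(int m - 2) * T x j \<ge> (int m - 2) * (int m - 1) ^ j"
      using IH m2 by (intro mult_left_mono) auto
    moreover have "g x j y0 \<ge> r (int m) j" using IH y0(1) unfolding A_def by blast
    ultimately show ?thesis using TZ by simp
  qed
  show ?case using I1 I2 I3 unfolding B_def by blast
qed

lemma cnt_S_lower:
  assumes m2: "m \<ge> 2"
  shows "int (card (col S)) \<ge> int m * r (int m) l"
proof -
  have l0: "0 < l" "l - 1 < l" using l3 by linarith+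
  have l1: "Suc (l - 1) = l" using l3 by simp
  define C where "C = L (xs ! (l - 1))"
  have finC: "finite C" unfolding C_def using finLi l0 by simp
  have cC: "card C = m" unfolding C_def using cardL xsV l0 by simp
  have each: "(\<Sum>z\<in>{z \<in> C. {z, x} \<notin> EH}. g x (l - 1) z) \<ge> r (int m) l" if x: "x \<in> L (xs ! 0)" for x
  proof -
    have e: "{xs ! (l - 1), xs ! 0} \<in> E"
    proof -
      have "(l - 1 + 1) mod l = 0" using l1 by simp
      then show ?thesis using cyc_edge[OF l0(2)] by simp
    qed
    have "C \<noteq> {}" using cC m2 by auto
    then obtain zs where zs: "zs \<in> C" "{z \<in> C. {z, x} \<in> EH} \<subseteq> {zs}"
    proof (cases "\<exists>z\<in>C. {z, x} \<in> EH")
      case True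
      then obtain z where "z \<in> C" "{z, x} \<in> EH" by blast
      moreover have "{z' \<in> C. {z', x} \<in> EH} \<subseteq> {z}"
        using nb_unique[OF xsV[OF l0(2)] xsV[OF l0(1)] e x] calculation by (auto simp: C_def)
      ultimately show ?thesis using that by blast
    next
      case False
      then show ?thesis using that \<open>C \<noteq> {}\<close> by blast
    qed
    have "{z \<in> C. {z, x} \<notin> EH} = C - {z \<in> C. {z, x} \<in> EH}" by blast
    then have "(\<Sum>z\<in>{z \<in> C. {z, x} \<notin> EH}. g x (l - 1) z) = T x (l - 1) - (\<Sum>z\<in>{z \<in> C. {z, x} \<in> EH}. g x (l - 1) z)"
      using finC unfolding T_def C_def by (simp add: sum_diff)
    moreover have "(\<Sum>z\<in>{z \<in> C. {z, x} \<in> EH}. g x (l - 1) z) \<le> g x (l - 1) zs"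
      using sum_le_single[OF zs(2)] g_nonneg by blast
    moreover have "T x (l - 1) - g x (l - 1) zs \<ge> r (int m) l"
      using lower_inv[OF m2 x l0(2)] zs(1) l1 unfolding C_def by auto
    ultimately show ?thesis by simp
  qed
  have eq: "int (card (col S)) = (\<Sum>x\<in>L (xs ! 0). \<Sum>z\<in>{z \<in> C. {z, x} \<notin> EH}. g x (l - 1) z)"
    using cnt_S unfolding C_def .
  have ge: "(\<Sum>x\<in>L (xs ! 0). \<Sum>z\<in>{z \<in> C. {z, x} \<notin> EH}. g x (l - 1) z) \<ge> (\<Sum>x\<in>L (xs ! 0). r (int m) l)"
    using each by (intro sum_mono) auto
  have "card (L (xs ! 0)) = m" using cardL xsV[OF l0(1)] by simp
  then have "(\<Sum>x\<in>L (xs ! 0). r (int m) l) = int m * r (int m) l" by simp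
  then show ?thesis using eq ge by linarith
qed

end

definition sh :: "bool \<Rightarrow> nat \<Rightarrow> nat \<Rightarrow> nat" where
  "sh tw m i = (if tw then Suc i mod m else i)"

lemma sh_lt: "i < m \<Longrightarrow> sh tw m i < m" unfolding sh_def by auto

lemma sh_inj: "i < m \<Longrightarrow> i' < m \<Longrightarrow> sh tw m i = sh tw m i' \<Longrightarrow> i = i'"
  unfolding sh_def by (auto simp: mod_Suc split: if_splits)

context ucg
begin

abbreviation "aa \<equiv> xs ! (l - 1)"
abbreviation "bb \<equiv> xs ! 0"

definition EHs :: "nat \<Rightarrow> bool \<Rightarrow> ('v \<times> nat) set set" where
  "EHs m tw = {{(u,i),(u,j)} | u i j. u \<in> V \<and> i < m \<and> j < m \<and> i \<noteq> j}
     \<union> {{(u,i),(w,i)} | u w i. {u,w} \<in> E \<and> {u,w} \<noteq> {aa, bb} \<and> i < m}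
     \<union> {{(aa,i),(bb, sh tw m i)} | i. i < m}"

lemma ab: "aa \<noteq> bb" "{aa, bb} \<in> E" "aa \<in> V" "bb \<in> V"
proof -
  have l0: "0 < l" "l - 1 < l" using l3 by linarith+
  have "l - 1 \<noteq> 0" using l3 by linarith
  then show "aa \<noteq> bb" using dist l0 by (simp add: nth_eq_iff_index_eq)
  have "Suc (l - Suc 0) = l" using l3 by simp
  then have "(l - 1 + 1) mod l = 0" by simp
  then show "{aa, bb} \<in> E" using cyc_edge[OF l0(2)] by simp
  show "aa \<in> V" "bb \<in> V" using SV l0 nth_mem by blast+
qed

lemma EHs_cases:
  assumes "e \<in> EHs m tw"
  obtains (C) u i j where "e = {(u,i),(u,j)}" "u \<in> V" "i < m" "j < m" "i \<noteq> j"
    | (I) u w k where "e = {(u,k),(w,k)}" "{u,w} \<in> E" "{u,w} \<noteq> {aa,bb}" "k < m"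
    | (T) k where "e = {(aa,k),(bb,sh tw m k)}" "k < m"
  using assms unfolding EHs_def
  apply (elim UnE CollectE exE conjE)
  subgoal by (rule C)
  subgoal by (rule I)
  subgoal by (rule T)
  done

lemma EHs_char:
  assumes uw: "u \<noteq> w"
  shows "{(u,i),(w,j)} \<in> EHs m tw \<longleftrightarrow> i < m \<and> j < m \<and> {u,w} \<in> E \<and>
     (if {u,w} = {aa,bb} then (if u = aa then j = sh tw m i else i = sh tw m j) else i = j)"
proof
  assume "{(u,i),(w,j)} \<in> EHs m tw"
  then show "i < m \<and> j < m \<and> {u,w} \<in> E \<and>
     (if {u,w} = {aa,bb} then (if u = aa then j = sh tw m i else i = sh tw m j) else i = j)"
  proof (cases rule: EHs_cases)
    case C then show ?thesis using uw by (auto simp: doubleton_eq_iff)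
  next
    case I then show ?thesis using uw by (auto simp: doubleton_eq_iff insert_commute)
  next
    case T then show ?thesis using uw ab sh_lt by (auto simp: doubleton_eq_iff insert_commute)
  qed
next
  assume H: "i < m \<and> j < m \<and> {u,w} \<in> E \<and>
     (if {u,w} = {aa,bb} then (if u = aa then j = sh tw m i else i = sh tw m j) else i = j)"
  show "{(u,i),(w,j)} \<in> EHs m tw"
  proof (cases "{u,w} = {aa,bb}")
    case False
    then have "i = j" using H by simp
    then show ?thesis unfolding EHs_def using H False by blast
  next
    case True
    show ?thesis
    proof (cases "u = aa")
      case True
      then have "w = bb" "j = sh tw m i" using H \<open>{u,w} = {aa,bb}\<close> ab by (auto simp: doubleton_eq_iff)
      then show ?thesis unfolding EHs_def using H True by blast
    next
      case False
      then have "u = bb" "w = aa" "i = sh tw m j" using H \<open>{u,w} = {aa,bb}\<close> by (auto simp: doubleton_eq_iff)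
      then have "{(u,i),(w,j)} = {(aa,j),(bb,sh tw m j)}" by (auto simp: insert_commute)
      then show ?thesis unfolding EHs_def using H by blast
    qed
  qed
qed

lemma EHs_same: "{(u,i),(u,j)} \<in> EHs m tw \<Longrightarrow> u \<in> V \<and> i < m \<and> j < m \<and> i \<noteq> j"
proof -
  assume "{(u,i),(u,j)} \<in> EHs m tw"
  then show ?thesis
  proof (cases rule: EHs_cases)
    case C then show ?thesis by (auto simp: doubleton_eq_iff)
  next
    case (I u' w')
    then have "u' \<noteq> w'" by (metis edge_irrefl)
    then show ?thesis using I by (auto simp: doubleton_eq_iff)
  next
    case T then show ?thesis using ab by (auto simp: doubleton_eq_iff)
  qed
qed

lemma EHs_cover: "is_m_fold_cover V E m (\<lambda>u. {u} \<times> {..<m}) (V \<times> {..<m}) (EHs m tw)"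
  unfolding is_m_fold_cover_def is_cover_def
proof (intro conjI ballI impI)
  show "simple_graph (V \<times> {..<m}) (EHs m tw)"
    unfolding simple_graph_def
  proof (intro conjI ballI)
    show "finite (V \<times> {..<m})" using finV by simp
    fix e assume "e \<in> EHs m tw"
    then show "\<exists>x y. x \<noteq> y \<and> x \<in> V \<times> {..<m} \<and> y \<in> V \<times> {..<m} \<and> e = {x, y}"
    proof (cases rule: EHs_cases)
      case C then show ?thesis by blast
    next
      case (I u w)
      then have "u \<noteq> w" "u \<in> V" "w \<in> V" using simple_graph_edge[OF sg] by blast+
      then show ?thesis using I by blast
    next
      case (T k) then show ?thesis using ab sh_lt[of k m tw] by blast
    qed
  qed
  show "V \<times> {..<m} = (\<Union>u\<in>V. {u} \<times> {..<m})" by blast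
next
  fix u v assume "u \<in> V" "v \<in> V" "u \<noteq> v"
  then show "{u} \<times> {..<m} \<inter> {v} \<times> {..<m} = {}" by blast
next
  fix u x y assume "u \<in> V" "x \<in> {u} \<times> {..<m}" "y \<in> {u} \<times> {..<m}" "x \<noteq> y"
  then obtain i j where ij: "x = (u,i)" "y = (u,j)" "i < m" "j < m" "i \<noteq> j" by blast
  then have "{x,y} \<in> {{(u,i),(u,j)} | u i j. u \<in> V \<and> i < m \<and> j < m \<and> i \<noteq> j}"
    using \<open>u \<in> V\<close> by blast
  then show "{x, y} \<in> EHs m tw" unfolding EHs_def by (intro UnI1)
next
  fix u v assume u: "u \<in> V" and v: "v \<in> V"
    and ne: "edges_between (EHs m tw) ({u} \<times> {..<m}) ({v} \<times> {..<m}) \<noteq> {}"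
  then obtain i j where "{(u,i),(v,j)} \<in> EHs m tw" unfolding edges_between_def by blast
  then show "u = v \<or> {u, v} \<in> E" using EHs_char[of u v] by (cases "u = v") auto
next
  fix u v assume u: "u \<in> V" and v: "v \<in> V" and e: "{u,v} \<in> E"
  have uv: "u \<noteq> v" using e edge_irrefl by blast
  show "is_matching (edges_between (EHs m tw) ({u} \<times> {..<m}) ({v} \<times> {..<m}))"
    unfolding is_matching_def
  proof (intro ballI impI)
    fix e1 e2 assume e1: "e1 \<in> edges_between (EHs m tw) ({u} \<times> {..<m}) ({v} \<times> {..<m})"
      and e2: "e2 \<in> edges_between (EHs m tw) ({u} \<times> {..<m}) ({v} \<times> {..<m})" and ne: "e1 \<noteq> e2"
    obtain i j where ij: "e1 = {(u,i),(v,j)}" "{(u,i),(v,j)} \<in> EHs m tw"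
      using e1 unfolding edges_between_def by blast
    obtain i' j' where ij': "e2 = {(u,i'),(v,j')}" "{(u,i'),(v,j')} \<in> EHs m tw"
      using e2 unfolding edges_between_def by blast
    have R: "i < m" "j < m" "i' < m" "j' < m"
      "if {u,v} = {aa,bb} then (if u = aa then j = sh tw m i else i = sh tw m j) else i = j"
      "if {u,v} = {aa,bb} then (if u = aa then j' = sh tw m i' else i' = sh tw m j') else i' = j'"
      using EHs_char[OF uv] ij(2) ij'(2) by blast+
    have fun1: "i = i' \<Longrightarrow> j = j'" and fun2: "j = j' \<Longrightarrow> i = i'"
      using R sh_inj[of _ m] by (auto split: if_splits)
    show "e1 \<inter> e2 = {}"
    proof (rule ccontr)
      assume "e1 \<inter> e2 \<noteq> {}"
      then have "i = i' \<or> j = j'" using ij ij' uv by auto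
      then have "i = i' \<and> j = j'" using fun1 fun2 by blast
      then show False using ne ij ij' by simp
    qed
  qed
next
  fix u assume "u \<in> V" then show "card ({u} \<times> {..<m}) = m" by (simp add: card_cartesian_product)
qed

end

fun af :: "int \<Rightarrow> nat \<Rightarrow> int" where
  "af M 0 = 0"
| "af M (Suc j) = (M - 1) ^ j - af M j"

lemma af_closed: "M * af M j + (-1) ^ j = (M - 1) ^ j"
proof (induction j)
  case (Suc j)
  have "M * af M (Suc j) + (-1) ^ Suc j = M * (M - 1) ^ j - (M * af M j + (-1) ^ j)"
    by (simp add: algebra_simps)
  also have "\<dots> = (M - 1) ^ Suc j" using Suc by (simp add: algebra_simps)
  finally show ?case .
qed simp

lemma sum_ind:
  assumes "i0 < m"
  shows "(\<Sum>i<m. (A::int) + e * (if i = i0 then 1 else 0)) = int m * A + e"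
proof -
  have "(\<Sum>i<m. e * (if i = i0 then 1 else 0)) = (\<Sum>i<m. if i = i0 then e else 0)"
    by (intro sum.cong) auto
  also have "\<dots> = e" using assms by simp
  finally show ?thesis by (simp add: sum.distrib)
qed

lemma sum_ind_minus:
  assumes "i0 < m" "k < m"
  shows "(\<Sum>i\<in>{..<m} - {k}. (A::int) + e * (if i = i0 then 1 else 0))
      = int m * A + e - (A + e * (if k = i0 then 1 else 0))"
  using assms by (simp add: sum_diff1 sum_ind)

locale spc = ucg V E xs for V :: "'v set" and E xs +
  fixes m :: nat and tw :: bool

sublocale spc \<subseteq> C: cov V E xs m "\<lambda>u. {u} \<times> {..<m}" "V \<times> {..<m}" "EHs m tw"
  by unfold_locales (rule EHs_cover)

context spc
begin

lemma tree_exact: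
  assumes inv: "inv W" and v: "v \<in> V" "v \<notin> W" and p: "p \<in> W" "{v,p} \<in> E" and c: "c \<in> C.col W"
  shows "card {y \<in> {v} \<times> {..<m}. {c p, y} \<notin> EHs m tw} = m - 1"
proof -
  have SW: "S \<subseteq> W" using inv unfolding inv_def by simp
  have pv: "p \<noteq> v" using p v by blast
  have "c p \<in> {p} \<times> {..<m}" using c p unfolding C.col_def by auto
  then obtain i where i: "c p = (p, i)" "i < m" by blast
  have l0: "0 < l" "l - 1 < l" using l3 by linarith+
  have "aa \<in> S" "bb \<in> S" using l0 nth_mem by blast+
  then have nab: "{p,v} \<noteq> {aa,bb}" using v SW by (auto simp: doubleton_eq_iff)
  have pve: "{p,v} \<in> E" using p by (simp add: insert_commute)
  have "{y \<in> {v} \<times> {..<m}. {c p, y} \<notin> EHs m tw} = {v} \<times> ({..<m} - {i})"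
  proof (intro set_eqI iffI)
    fix y assume "y \<in> {y \<in> {v} \<times> {..<m}. {c p, y} \<notin> EHs m tw}"
    then have y1: "y \<in> {v} \<times> {..<m}" "{c p, y} \<notin> EHs m tw" by auto
    then obtain j where y2: "y = (v, j)" "j < m" by blast
    then have y: "y = (v, j)" "j < m" "{(p,i),(v,j)} \<notin> EHs m tw" using y1 i by auto
    then have "j \<noteq> i" using EHs_char[OF pv] i pve nab by auto
    then show "y \<in> {v} \<times> ({..<m} - {i})" using y by blast
  next
    fix y assume "y \<in> {v} \<times> ({..<m} - {i})"
    then obtain j where y: "y = (v, j)" "j < m" "j \<noteq> i" by blast
    then have "{(p,i),(v,j)} \<notin> EHs m tw" using EHs_char[OF pv] nab by auto
    then show "y \<in> {y \<in> {v} \<times> {..<m}. {c p, y} \<notin> EHs m tw}" using y i by auto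
  qed
  then show ?thesis using i by (simp add: card_cartesian_product)
qed

lemma cnt_V_exact: "card (C.col V) = (m - 1) ^ (card V - l) * card (C.col S)"
proof -
  have "card (C.col V) = (m - 1) ^ (card V - card S) * card (C.col S)"
    using C.main_eq[OF inv_S] tree_exact by blast
  then show ?thesis using distinct_card[OF dist] by simp
qed

lemma consec_nab:
  assumes "Suc j < l"
  shows "{xs ! j, xs ! Suc j} \<noteq> {aa, bb}" "xs ! j \<noteq> xs ! Suc j"
proof -
  have l0: "l - 1 < l" "0 < l" using l3 by linarith+
  have d: "\<And>a b. a < l \<Longrightarrow> b < l \<Longrightarrow> xs ! a = xs ! b \<longleftrightarrow> a = b"
    using dist by (simp add: nth_eq_iff_index_eq)
  show "xs ! j \<noteq> xs ! Suc j" using d[of j "Suc j"] assms by simp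
  have "xs ! j \<noteq> aa" using d[of j "l - 1"] assms l0 by simp
  moreover have "xs ! j = bb \<Longrightarrow> xs ! Suc j \<noteq> aa"
    using d[of j 0] d[of "Suc j" "l - 1"] assms l0 l3 by simp
  ultimately show "{xs ! j, xs ! Suc j} \<noteq> {aa, bb}" by (auto simp: doubleton_eq_iff)
qed

lemma g_exact:
  assumes i0: "i0 < m" and j: "j < l" and i: "i < m"
  shows "C.g (bb, i0) j (xs ! j, i) = af (int m) j + (-1) ^ j * (if i = i0 then 1 else 0)"
  using j i
proof (induction j arbitrary: i)
  case 0 then show ?case by simp
next
  case (Suc j)
  have nab: "{xs ! j, xs ! Suc j} \<noteq> {aa, bb}" and ne: "xs ! j \<noteq> xs ! Suc j"
    using consec_nab[OF Suc.prems(1)] by auto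
  have e: "{xs ! j, xs ! Suc j} \<in> E" using C.consec[OF Suc.prems(1)] by simp
  have set: "{y \<in> {xs ! j} \<times> {..<m}. {y, (xs ! Suc j, i)} \<notin> EHs m tw} = (\<lambda>i'. (xs ! j, i')) ` ({..<m} - {i})"
  proof (intro set_eqI iffI)
    fix y assume "y \<in> {y \<in> {xs ! j} \<times> {..<m}. {y, (xs ! Suc j, i)} \<notin> EHs m tw}"
    then have y1: "y \<in> {xs ! j} \<times> {..<m}" "{y, (xs ! Suc j, i)} \<notin> EHs m tw" by auto
    then obtain i' where y2: "y = (xs ! j, i')" "i' < m" by blast
    then have y: "y = (xs ! j, i')" "i' < m" "{(xs ! j, i'), (xs ! Suc j, i)} \<notin> EHs m tw" using y1 by auto
    then have "i' \<noteq> i" using EHs_char[OF ne] Suc.prems e nab by auto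
    then show "y \<in> (\<lambda>i'. (xs ! j, i')) ` ({..<m} - {i})" using y by blast
  next
    fix y assume "y \<in> (\<lambda>i'. (xs ! j, i')) ` ({..<m} - {i})"
    then obtain i' where y: "y = (xs ! j, i')" "i' < m" "i' \<noteq> i" by blast
    then have "{(xs ! j, i'), (xs ! Suc j, i)} \<notin> EHs m tw" using EHs_char[OF ne] nab by auto
    then show "y \<in> {y \<in> {xs ! j} \<times> {..<m}. {y, (xs ! Suc j, i)} \<notin> EHs m tw}" using y by auto
  qed
  have "C.g (bb, i0) (Suc j) (xs ! Suc j, i) = (\<Sum>y\<in>(\<lambda>i'. (xs ! j, i')) ` ({..<m} - {i}). C.g (bb, i0) j y)"
    using set by simp
  also have "\<dots> = (\<Sum>i'\<in>{..<m} - {i}. C.g (bb, i0) j (xs ! j, i'))"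
    by (rule sum.reindex_cong[where l = "\<lambda>i'. (xs ! j, i')"]) (auto intro: inj_onI)
  also have "\<dots> = (\<Sum>i'\<in>{..<m} - {i}. af (int m) j + (-1) ^ j * (if i' = i0 then 1 else 0))"
    using Suc.IH Suc.prems by (intro sum.cong refl) auto
  also have "\<dots> = int m * af (int m) j + (-1) ^ j - (af (int m) j + (-1) ^ j * (if i = i0 then 1 else 0))"
    using sum_ind_minus[OF i0 Suc.prems(2)] .
  also have "\<dots> = af (int m) (Suc j) + (-1) ^ Suc j * (if i = i0 then 1 else 0)"
    using af_closed[of "int m" j] by simp
  finally show ?case .
qed

lemma cnt_S_exact:
  assumes m2: "m \<ge> 2" and par: "(\<not> tw \<and> odd l) \<or> (tw \<and> even l)"
  shows "int (card (C.col S)) = int m * r (int m) l"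
proof -
  have l0: "0 < l" "l - 1 < l" using l3 by linarith+
  have l1: "Suc (l - 1) = l" using l3 by simp
  define A where "A = af (int m) (l - 1)"
  define e :: int where "e = (-1) ^ (l - 1)"
  define inner where "inner = (if tw then (int m - 1) * A + e else (int m - 1) * A)"
  have each: "(\<Sum>z\<in>{z \<in> {aa} \<times> {..<m}. {z, x} \<notin> EHs m tw}. C.g x (l - 1) z) = inner"
    if x: "x \<in> {bb} \<times> {..<m}" for x
  proof -
    obtain i0 where i0: "x = (bb, i0)" "i0 < m" using x by blast
    define k where "k = (if tw then (if i0 = 0 then m - 1 else i0 - 1) else i0)"
    have k: "k < m" "sh tw m k = i0" using i0 m2 unfolding k_def sh_def by (auto simp: mod_Suc)
    have kk: "k = i0 \<longleftrightarrow> \<not> tw" using i0 m2 unfolding k_def by auto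
    have set: "{z \<in> {aa} \<times> {..<m}. {z, x} \<notin> EHs m tw} = (\<lambda>i. (aa, i)) ` ({..<m} - {k})"
    proof (intro set_eqI iffI)
      fix z assume "z \<in> {z \<in> {aa} \<times> {..<m}. {z, x} \<notin> EHs m tw}"
      then have z1: "z \<in> {aa} \<times> {..<m}" "{z, x} \<notin> EHs m tw" by auto
      then obtain i where z2: "z = (aa, i)" "i < m" by blast
      then have z: "z = (aa, i)" "i < m" "{(aa, i), (bb, i0)} \<notin> EHs m tw" using z1 i0 by auto
      then have "sh tw m i \<noteq> i0" using EHs_char[OF ab(1)] ab(2) i0 by auto
      then have "i \<noteq> k" using k by auto
      then show "z \<in> (\<lambda>i. (aa, i)) ` ({..<m} - {k})" using z by blast
    next
      fix z assume "z \<in> (\<lambda>i. (aa, i)) ` ({..<m} - {k})"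
      then obtain i where z: "z = (aa, i)" "i < m" "i \<noteq> k" by blast
      then have "sh tw m i \<noteq> i0" using k sh_inj by metis
      then have "{(aa, i), (bb, i0)} \<notin> EHs m tw" using EHs_char[OF ab(1)] by auto
      then show "z \<in> {z \<in> {aa} \<times> {..<m}. {z, x} \<notin> EHs m tw}" using z i0 by auto
    qed
    have "(\<Sum>z\<in>{z \<in> {aa} \<times> {..<m}. {z, x} \<notin> EHs m tw}. C.g x (l - 1) z)
        = (\<Sum>i\<in>{..<m} - {k}. C.g x (l - 1) (aa, i))"
      unfolding set by (rule sum.reindex_cong[where l = "\<lambda>i. (aa, i)"]) (auto intro: inj_onI)
    also have "\<dots> = (\<Sum>i\<in>{..<m} - {k}. A + e * (if i = i0 then 1 else 0))"
      using g_exact[OF i0(2) l0(2)] i0(1) unfolding A_def e_def by (intro sum.cong refl) auto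
    also have "\<dots> = int m * A + e - (A + e * (if k = i0 then 1 else 0))"
      using sum_ind_minus[OF i0(2) k(1)] .
    also have "\<dots> = inner" unfolding inner_def using kk by (auto simp: algebra_simps)
    finally show ?thesis .
  qed
  have "int (card (C.col S)) = (\<Sum>x\<in>{bb} \<times> {..<m}. \<Sum>z\<in>{z \<in> {aa} \<times> {..<m}. {z, x} \<notin> EHs m tw}. C.g x (l - 1) z)"
    using C.cnt_S .
  also have "\<dots> = (\<Sum>x\<in>{bb} \<times> {..<m}. inner)" using each by (intro sum.cong refl) auto
  also have "\<dots> = int m * inner" by (simp add: card_cartesian_product)
  also have "\<dots> = int m * r (int m) l"
  proof -
    have ac: "int m * A = (int m - 1) ^ (l - 1) - e" using af_closed[of "int m" "l - 1"] unfolding A_def e_def by simp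
    have pw: "(int m - 1) ^ l = (int m - 1) * (int m - 1) ^ (l - 1)" using l1 by (metis power_Suc)
    have rc: "int m * r (int m) l = (int m - 1) ^ l - (if even l then 1 else int m - 1)" by (rule r_closed)
    show ?thesis
    proof (cases tw)
      case True
      then have ev: "even l" using par by simp
      then have "odd (l - 1)" using l0 by simp
      then have e1: "e = -1" unfolding e_def by simp
      have "int m * inner = (int m - 1) * (int m * A) + int m * e" unfolding inner_def using True by (simp add: algebra_simps)
      also have "\<dots> = (int m - 1) * ((int m - 1) ^ (l - 1) + 1) - int m" using ac e1 by simp
      also have "\<dots> = (int m - 1) ^ l - 1" using pw by (simp add: algebra_simps)
      also have "\<dots> = int m * r (int m) l" using rc ev by simp
      finally show ?thesis .
    next
      case False
      then have od: "odd l" using par by simp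
      then have "even (l - 1)" using l0 by simp
      then have e1: "e = 1" unfolding e_def by simp
      have "int m * inner = (int m - 1) * (int m * A)" unfolding inner_def using False by (simp add: algebra_simps)
      also have "\<dots> = (int m - 1) * ((int m - 1) ^ (l - 1) - 1)" using ac e1 by simp
      also have "\<dots> = (int m - 1) ^ l - (int m - 1)" using pw by (simp add: algebra_simps)
      also have "\<dots> = int m * r (int m) l" using rc od by simp
      finally show ?thesis .
    qed
  qed
  finally show ?thesis .
qed

end

context spc
begin

lemma chrom_col:
  assumes ntw: "\<not> tw"
  shows "chrom_poly V E m = card (C.col V)"
proof -
  define CH where "CH = {f \<in> V \<rightarrow>\<^sub>E {..<m}. \<forall>u v. {u, v} \<in> E \<longrightarrow> f u \<noteq> f v}"
  define F where "F f = (\<lambda>u. if u \<in> V then (u, f u) else undefined)" for f :: "'v \<Rightarrow> nat"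
  have shid: "\<And>i. sh tw m i = i" using ntw unfolding sh_def by simp
  have charid: "{(u,i),(w,j)} \<in> EHs m tw \<longleftrightarrow> i < m \<and> j < m \<and> {u,w} \<in> E \<and> i = j" if "u \<noteq> w" for u w i j
    using EHs_char[OF that, of i j m tw] shid by auto
  have inj: "inj_on F CH"
  proof (rule inj_onI)
    fix f f' assume f: "f \<in> CH" and f': "f' \<in> CH" and eq: "F f = F f'"
    have "\<forall>u\<in>V. f u = f' u"
    proof
      fix u assume "u \<in> V" then show "f u = f' u" using fun_cong[OF eq, of u] unfolding F_def by simp
    qed
    moreover have "f \<in> V \<rightarrow>\<^sub>E {..<m}" "f' \<in> V \<rightarrow>\<^sub>E {..<m}" using f f' unfolding CH_def by auto
    ultimately show "f = f'" using PiE_ext by metis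
  qed
  have img: "F ` CH = C.col V"
  proof
    show "F ` CH \<subseteq> C.col V"
    proof
      fix c assume "c \<in> F ` CH"
      then obtain f where f: "f \<in> CH" "c = F f" by blast
      have fm: "\<And>u. u \<in> V \<Longrightarrow> f u < m" using f unfolding CH_def by auto
      have fp: "\<And>u w. {u,w} \<in> E \<Longrightarrow> f u \<noteq> f w" using f unfolding CH_def by auto
      show "c \<in> C.col V" unfolding C.col_def
      proof (intro CollectI conjI ballI allI impI)
        fix u assume "u \<in> V" then show "c u \<in> {u} \<times> {..<m}" using f fm unfolding F_def by simp
      next
        fix u assume "u \<notin> V" then show "c u = undefined" using f unfolding F_def by simp
      next
        fix u w assume u: "u \<in> V" and w: "w \<in> V" and e: "{u,w} \<in> E"
        have uw: "u \<noteq> w" using e edge_irrefl by blast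
        have "{(u, f u), (w, f w)} \<notin> EHs m tw" using charid[OF uw] fp[OF e] by simp
        then show "{c u, c w} \<notin> EHs m tw" using f u w unfolding F_def by simp
      qed
    qed
  next
    show "C.col V \<subseteq> F ` CH"
    proof
      fix c assume c: "c \<in> C.col V"
      have cL: "\<And>u. u \<in> V \<Longrightarrow> c u \<in> {u} \<times> {..<m}" and cU: "\<And>u. u \<notin> V \<Longrightarrow> c u = undefined"
        and cE: "\<And>u w. u \<in> V \<Longrightarrow> w \<in> V \<Longrightarrow> {u,w} \<in> E \<Longrightarrow> {c u, c w} \<notin> EHs m tw"
        using c unfolding C.col_def by auto
      define f where "f u = (if u \<in> V then snd (c u) else undefined)" for u
      have cu: "\<And>u. u \<in> V \<Longrightarrow> c u = (u, f u)" using cL unfolding f_def by fastforce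
      have "f \<in> CH" unfolding CH_def
      proof (intro CollectI conjI allI impI)
        have "\<And>u. u \<in> V \<Longrightarrow> snd (c u) < m" using cL by (metis SigmaE lessThan_iff snd_conv)
        then show "f \<in> V \<rightarrow>\<^sub>E {..<m}" unfolding f_def by (auto simp: PiE_def extensional_def)
        fix u w assume e: "{u,w} \<in> E"
        have u: "u \<in> V" and w: "w \<in> V" and uw: "u \<noteq> w" using simple_graph_edge[OF sg e] by auto
        have "{(u, f u), (w, f w)} \<notin> EHs m tw" using cE[OF u w e] cu u w by simp
        moreover have "f u < m" "f w < m" using cL u w cu by fastforce+
        ultimately show "f u \<noteq> f w" using charid[OF uw] e by auto
      qed
      moreover have "F f = c"
      proof
        fix u show "F f u = c u" using cu cU unfolding F_def by simp
      qed
      ultimately show "c \<in> F ` CH" by blast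
    qed
  qed
  have "chrom_poly V E m = card CH" unfolding chrom_poly_def CH_def ..
  also have "\<dots> = card (C.col V)" using card_image[OF inj] img by simp
  finally show ?thesis .
qed

end

context ucg
begin

lemma l_le_n: "l \<le> card V"
  using card_mono[OF finV SV] distinct_card[OF dist] by simp

lemma spec_count:
  assumes m2: "m \<ge> 2" and par: "(\<not> tw \<and> odd l) \<or> (tw \<and> even l)"
  shows "int (P_DP_cover V (V \<times> {..<m}, EHs m tw)) = (int m - 1) ^ (card V - l) * (int m * r (int m) l)"
proof -
  interpret P: spc V E xs m tw by unfold_locales
  have "P_DP_cover V (V \<times> {..<m}, EHs m tw) = card (P.C.col V)" by (rule P.C.P_DP_cover_col)
  also have "\<dots> = (m - 1) ^ (card V - l) * card (P.C.col S)" by (rule P.cnt_V_exact)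
  finally have "int (P_DP_cover V (V \<times> {..<m}, EHs m tw)) = int ((m - 1) ^ (card V - l)) * int (card (P.C.col S))"
    by simp
  also have "\<dots> = (int m - 1) ^ (card V - l) * (int m * r (int m) l)"
    using P.cnt_S_exact[OF m2 par] m2 by (simp add: of_nat_diff)
  finally show ?thesis .
qed

lemma lower_any:
  assumes m2: "m \<ge> 2" and cv: "is_m_fold_cover V E m L VH EH"
  shows "int (P_DP_cover V (VH, EH)) \<ge> (int m - 1) ^ (card V - l) * (int m * r (int m) l)"
proof -
  interpret P: cov V E xs m L VH EH by unfold_locales (rule cv)
  have "int (P_DP_cover V (VH, EH)) = int (card (P.col V))" by (simp add: P.P_DP_cover_col)
  also have "\<dots> \<ge> (int m - 1) ^ (card V - card S) * int (card (P.col S))"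
    using P.main_ge[OF _ inv_S] m2 by simp
  finally have 1: "int (P_DP_cover V (VH, EH)) \<ge> (int m - 1) ^ (card V - l) * int (card (P.col S))"
    using distinct_card[OF dist] by simp
  have "(int m - 1) ^ (card V - l) * int (card (P.col S)) \<ge> (int m - 1) ^ (card V - l) * (int m * r (int m) l)"
    using P.cnt_S_lower[OF m2] m2 by (intro mult_left_mono) auto
  then show ?thesis using 1 by linarith
qed

definition covs :: "nat \<Rightarrow> nat set" where
  "covs m = {P_DP_cover V (VH, EH) | (L :: 'v \<Rightarrow> ('v \<times> nat) set) VH EH. is_m_fold_cover V E m L VH EH}"

lemma P_DP_covs: "P_DP V E m = Inf (covs m)" unfolding P_DP_def covs_def ..

lemma spec_in_covs: "P_DP_cover V (V \<times> {..<m}, EHs m tw) \<in> covs m"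
  unfolding covs_def using EHs_cover[of m tw] by blast

lemma P_DP_le: "P_DP V E m \<le> P_DP_cover V (V \<times> {..<m}, EHs m tw)"
  unfolding P_DP_covs by (rule cInf_lower[OF spec_in_covs]) simp

lemma P_DP_ge:
  assumes m2: "m \<ge> 2"
  shows "int (P_DP V E m) \<ge> (int m - 1) ^ (card V - l) * (int m * r (int m) l)"
proof -
  have "covs m \<noteq> {}" using spec_in_covs by blast
  then have "Inf (covs m) \<in> covs m" by (rule Inf_nat_def1)
  then obtain L :: "'v \<Rightarrow> ('v \<times> nat) set" and VH EH where
    cv: "is_m_fold_cover V E m L VH EH" and eq: "P_DP V E m = P_DP_cover V (VH, EH)"
    unfolding P_DP_covs covs_def by blast
  show ?thesis using lower_any[OF m2 cv] eq by simp
qed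

lemma chrom_small:
  assumes "m \<le> 1" shows "chrom_poly V E m = 0"
proof -
  have l0: "0 < l" "1 < l" using l3 by linarith+
  have e: "{xs ! 0, xs ! 1} \<in> E" using cyc_edge[OF l0(1)] l0 by simp
  have x: "xs ! 0 \<in> V" "xs ! 1 \<in> V" using SV l0 nth_mem by blast+
  have emp: "{f \<in> V \<rightarrow>\<^sub>E {..<m}. \<forall>u v. {u, v} \<in> E \<longrightarrow> f u \<noteq> f v} = {}"
  proof (rule ccontr)
    assume "{f \<in> V \<rightarrow>\<^sub>E {..<m}. \<forall>u v. {u, v} \<in> E \<longrightarrow> f u \<noteq> f v} \<noteq> {}"
    then obtain f where f: "f \<in> V \<rightarrow>\<^sub>E {..<m}" "\<forall>u v. {u, v} \<in> E \<longrightarrow> f u \<noteq> f v" by blast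
    have "f (xs ! 0) < m" "f (xs ! 1) < m" using f(1) x by auto
    then have "f (xs ! 0) = f (xs ! 1)" using assms by simp
    then show False using f(2) e by blast
  qed
  show ?thesis unfolding chrom_poly_def emp by simp
qed

lemma chrom_spec: "chrom_poly V E m = P_DP_cover V (V \<times> {..<m}, EHs m False)"
proof -
  interpret P: spc V E xs m False by unfold_locales
  show ?thesis using P.chrom_col P.C.P_DP_cover_col by simp
qed

end

theorem mainTheorem5:
  fixes V :: "'v set" and E :: "'v set set" and xs :: "'v list" and k :: nat
  assumes "unicyclic V E" and "is_cycle V E xs"
  shows "(length xs = 2 * k + 1 \<longrightarrow> (\<forall>m. P_DP V E m = chrom_poly V E m)) \<and>
         (length xs = 2 * k + 2 \<longrightarrow> (\<forall>m \<ge> 2.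
             int (P_DP V E m) = (int m - 1) ^ card V - (int m - 1) ^ (card V - (2 * k + 2))))"
proof -
  interpret U: ucg V E xs using assms by unfold_locales
  show ?thesis
  proof (intro conjI impI allI)
    fix m assume l: "length xs = 2 * k + 1"
    then have od: "odd (length xs)" by simp
    show "P_DP V E m = chrom_poly V E m"
    proof (cases "m \<le> 1")
      case True
      then show ?thesis using U.P_DP_le[of m False] U.chrom_small U.chrom_spec by simp
    next
      case False
      then have m2: "m \<ge> 2" by simp
      have "int (chrom_poly V E m) = (int m - 1) ^ (card V - length xs) * (int m * r (int m) (length xs))"
        using U.spec_count[OF m2, of False] od U.chrom_spec by simp
      then have "int (chrom_poly V E m) \<le> int (P_DP V E m)" using U.P_DP_ge[OF m2] by simp
      moreover have "P_DP V E m \<le> chrom_poly V E m" using U.P_DP_le[of m False] U.chrom_spec by simp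
      ultimately show ?thesis by simp
    qed
  next
    fix m :: nat assume l: "length xs = 2 * k + 2" and m2: "m \<ge> 2"
    then have ev: "even (length xs)" by simp
    have up: "int (P_DP V E m) \<le> (int m - 1) ^ (card V - length xs) * (int m * r (int m) (length xs))"
      using U.P_DP_le[of m True] U.spec_count[OF m2, of True] ev by simp
    have lo: "int (P_DP V E m) \<ge> (int m - 1) ^ (card V - length xs) * (int m * r (int m) (length xs))"
      using U.P_DP_ge[OF m2] .
    have A: "int m * r (int m) (length xs) = (int m - 1) ^ length xs - 1" using r_closed ev by simp
    have B: "(int m - 1) ^ (card V - length xs) * (int m - 1) ^ length xs = (int m - 1) ^ card V"
      using U.l_le_n by (simp add: power_add[symmetric])
    have "(int m - 1) ^ (card V - length xs) * (int m * r (int m) (length xs))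
       = (int m - 1) ^ (card V - length xs) * ((int m - 1) ^ length xs - 1)" using A by simp
    also have "\<dots> = (int m - 1) ^ (card V - length xs) * (int m - 1) ^ length xs - (int m - 1) ^ (card V - length xs)"
      by (simp add: right_diff_distrib)
    also have "\<dots> = (int m - 1) ^ card V - (int m - 1) ^ (card V - length xs)" using B by simp
    finally have "(int m - 1) ^ (card V - length xs) * (int m * r (int m) (length xs))
       = (int m - 1) ^ card V - (int m - 1) ^ (card V - length xs)" .
    then show "int (P_DP V E m) = (int m - 1) ^ card V - (int m - 1) ^ (card V - (2 * k + 2))"
      using up lo l by simp
  qed
qed

end
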